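(* There is a metric on $\mathcal{I}_\alpha$ that generates the same topology as $d_\alpha$, and with respect to which $\mathcal{I}_\alpha$ is isometric to a subset of a compact metric space.
   Context: Fix $\alpha\in(0,1)$. An interval partition is a set $\beta$ of disjoint open subintervals (blocks) of some interval $[0,L]$ that cover $[0,L]$ up to a Lebesgue-null set; write $\|\beta\|:=L$ and $\mathrm{Leb}(U)$ for the length of a block $U$. $\beta$ has the $\alpha$-diversity property if for every $t\in[0,\|\beta\|]$ the limit $\mathscr{D}_\beta(t):=\Gamma(1-\alpha)\lim_{h\downarrow0}h^\alpha\#\{(a,b)\in\beta\colon b-a>h,\ b\le t\}$ exists; $\mathcal{I}_\alpha$ is the set of such partitions. For $U\in\beta$, $\mathscr{D}_\beta(U):=\mathscr{D}_\beta(t)$ for $t\in U$; $\mathscr{D}_\beta(\infty):=\mathscr{D}_\beta(\|\beta\|)$. A correspondence between $\beta,\gamma\in\mathcal{I}_\alpha$ is a finite sequence $(U_j,V_j)_{j\in[n]}$, $n\ge0$, of pairs in $\beta\times\gamma$ with $(U_j)_j$ and $(V_j)_j$ each strictly increasing in left-to-right order. Its $\alpha$-distortion is the maximum of $\sum_{j}|\mathrm{Leb}(U_j)-\mathrm{Leb}(V_j)|+\|\beta\|-\sum_j\mathrm{Leb}(U_j)$, $\sum_{j}|\mathrm{Leb}(U_j)-\mathrm{Leb}(V_j)|+\|\gamma\|-\sum_j\mathrm{Leb}(V_j)$, $\sup_j|\mathscr{D}_\beta(U_j)-\mathscr{D}_\gamma(V_j)|$ and $|\mathscr{D}_\beta(\infty)-\mathscr{D}_\gamma(\infty)|$.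 $d_\alpha(\beta,\gamma)$ is the infimum of the $\alpha$-distortion over all correspondences. *)

theory Defs
  imports "HOL-Analysis.Analysis"
begin

text \<open>An interval partition is represented by its set of blocks; a block (a,b) stands
  for the open interval from a to b (with a < b).\<close>

type_synonym ipart = "(real \<times> real) set"

definition block :: "real \<times> real \<Rightarrow> real set" where
  "block U = {fst U<..<snd U}"

definition Leb :: "real \<times> real \<Rightarrow> real" where
  "Leb U = snd U - fst U"

definition is_IP :: "real \<Rightarrow> ipart \<Rightarrow> bool" where
  "is_IP L \<beta> \<longleftrightarrow> 0 \<le> L \<and>
     (\<forall>U\<in>\<beta>. 0 \<le> fst U \<and> fst U < snd U \<and> snd U \<le> L) \<and>
     pairwise (\<lambda>U V. block U \<inter> block V = {}) \<beta> \<and>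
     {0..L} - (\<Union>U\<in>\<beta>. block U) \<in> null_sets lborel"

definition IP :: "ipart set" where
  "IP = {\<beta>. \<exists>L. is_IP L \<beta>}"

text \<open>The total mass; for an interval partition of [0,L] this equals L.\<close>
definition IPnorm :: "ipart \<Rightarrow> real" where
  "IPnorm \<beta> = Sup (insert 0 (snd ` \<beta>))"

definition div_count :: "ipart \<Rightarrow> real \<Rightarrow> real \<Rightarrow> nat" where
  "div_count \<beta> t h = card {U\<in>\<beta>. Leb U > h \<and> snd U \<le> t}"

definition has_diversity :: "real \<Rightarrow> ipart \<Rightarrow> bool" where
  "has_diversity \<alpha> \<beta> \<longleftrightarrow>
     (\<forall>t\<in>{0..IPnorm \<beta>}. \<exists>l. ((\<lambda>h. h powr \<alpha> * real (div_count \<beta> t h)) \<longlongrightarrow> l) (at_right 0))"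

definition I_alpha :: "real \<Rightarrow> ipart set" where
  "I_alpha \<alpha> = {\<beta>\<in>IP. has_diversity \<alpha> \<beta>}"

definition diversity :: "real \<Rightarrow> ipart \<Rightarrow> real \<Rightarrow> real" where
  "diversity \<alpha> \<beta> t = Gamma (1 - \<alpha>) * Lim (at_right 0) (\<lambda>h. h powr \<alpha> * real (div_count \<beta> t h))"

text \<open>Diversity of a block: value at any point of the block (we use the midpoint).\<close>
definition block_div :: "real \<Rightarrow> ipart \<Rightarrow> real \<times> real \<Rightarrow> real" where
  "block_div \<alpha> \<beta> U = diversity \<alpha> \<beta> ((fst U + snd U) / 2)"

definition total_div :: "real \<Rightarrow> ipart \<Rightarrow> real" where
  "total_div \<alpha> \<beta> = diversity \<alpha> \<beta> (IPnorm \<beta>)"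

definition correspondence :: "ipart \<Rightarrow> ipart \<Rightarrow> ((real \<times> real) \<times> (real \<times> real)) list \<Rightarrow> bool" where
  "correspondence \<beta> \<gamma> c \<longleftrightarrow>
     (\<forall>p\<in>set c. fst p \<in> \<beta> \<and> snd p \<in> \<gamma>) \<and>
     sorted_wrt (\<lambda>p q. snd (fst p) \<le> fst (fst q)) c \<and>
     sorted_wrt (\<lambda>p q. snd (snd p) \<le> fst (snd q)) c"

definition distortion :: "real \<Rightarrow> ipart \<Rightarrow> ipart \<Rightarrow> ((real \<times> real) \<times> (real \<times> real)) list \<Rightarrow> real" where
  "distortion \<alpha> \<beta> \<gamma> c =
     (let S = (\<Sum>p\<leftarrow>c. \<bar>Leb (fst p) - Leb (snd p)\<bar>) in
      Max {S + IPnorm \<beta> - (\<Sum>p\<leftarrow>c. Leb (fst p)),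
           S + IPnorm \<gamma> - (\<Sum>p\<leftarrow>c. Leb (snd p)),
           Sup (insert 0 ((\<lambda>p. \<bar>block_div \<alpha> \<beta> (fst p) - block_div \<alpha> \<gamma> (snd p)\<bar>) ` set c)),
           \<bar>total_div \<alpha> \<beta> - total_div \<alpha> \<gamma>\<bar>})"

definition d_alpha :: "real \<Rightarrow> ipart \<Rightarrow> ipart \<Rightarrow> real" where
  "d_alpha \<alpha> \<beta> \<gamma> = Inf (distortion \<alpha> \<beta> \<gamma> ` {c. correspondence \<beta> \<gamma> c})"

end

theory Submission
  imports Defs
begin


definition prec :: "real \<times> real \<Rightarrow> real \<times> real \<Rightarrow> bool" where
  "prec U V \<longleftrightarrow> snd U \<le> fst V"

lemma IP_block: "is_IP L \<beta> \<Longrightarrow> U \<in> \<beta> \<Longrightarrow> 0 \<le> fst U \<and> fst U < snd U \<and> snd U \<le> L"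
  unfolding is_IP_def by blast

lemma IP_L: "is_IP L \<beta> \<Longrightarrow> 0 \<le> L"
  unfolding is_IP_def by blast

lemma IP_disj:
  assumes "is_IP L \<beta>" "U \<in> \<beta>" "V \<in> \<beta>" "U \<noteq> V"
  shows "prec U V \<or> prec V U"
proof (rule ccontr)
  assume H: "\<not> (prec U V \<or> prec V U)"
  have "block U \<inter> block V = {}" using assms unfolding is_IP_def pairwise_def by blast
  have u: "fst U < snd U" and v: "fst V < snd V" using IP_block assms by blast+
  define a where "a = max (fst U) (fst V)"
  define b where "b = min (snd U) (snd V)"
  have "a < b" using H u v unfolding prec_def a_def b_def by auto
  then have "(a+b)/2 \<in> block U \<inter> block V" unfolding block_def a_def b_def by auto
  then show False using \<open>block U \<inter> block V = {}\<close> by blast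
qed

lemma prec_irrefl: "fst U < snd U \<Longrightarrow> \<not> prec U U"
  unfolding prec_def by simp

lemma prec_asym: "fst U < snd U \<Longrightarrow> fst V < snd V \<Longrightarrow> prec U V \<Longrightarrow> \<not> prec V U"
  unfolding prec_def by simp

lemma Leb_pos: "is_IP L \<beta> \<Longrightarrow> U \<in> \<beta> \<Longrightarrow> 0 < Leb U"
  using IP_block[of L \<beta> U] unfolding Leb_def by auto

lemma sum_Leb_le_gen:
  assumes "finite F"
    and "\<And>U. U \<in> F \<Longrightarrow> a \<le> fst U \<and> fst U < snd U \<and> snd U \<le> b"
    and "\<And>U V. U \<in> F \<Longrightarrow> V \<in> F \<Longrightarrow> U \<noteq> V \<Longrightarrow> prec U V \<or> prec V U"
    and "a \<le> b"
  shows "sum Leb F \<le> b - a"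
  using assms
proof (induction "card F" arbitrary: F a b rule: less_induct)
  case less
  show ?case
  proof (cases "F = {}")
    case True
    then show ?thesis using less.prems by simp
  next
    case False
    then obtain x where x: "x \<in> F" by auto
    define FL where "FL = {U \<in> F - {x}. prec U x}"
    define FR where "FR = {U \<in> F - {x}. prec x U}"
    have xb: "a \<le> fst x" "fst x < snd x" "snd x \<le> b" using less.prems(2)[OF x] by auto
    have split: "F = insert x (FL \<union> FR)"
    proof -
      { fix U assume U: "U \<in> F" "U \<noteq> x"
        then have "prec U x \<or> prec x U" using less.prems(3)[OF U(1) x U(2)] by blast }
      then show ?thesis unfolding FL_def FR_def using x by blast
    qed
    have disj: "FL \<inter> FR = {}"
    proof -
      { fix U assume U: "U \<in> FL" "U \<in> FR"
        then have "snd U \<le> fst x" "snd x \<le> fst U" "U \<in> F" unfolding FL_def FR_def prec_def by auto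
        then have False using less.prems(2)[of U] xb by linarith }
      then show ?thesis by blast
    qed
    have fin: "finite FL" "finite FR" unfolding FL_def FR_def using less.prems(1) by auto
    have xn: "x \<notin> FL \<union> FR" unfolding FL_def FR_def by auto
    have cL: "card FL < card F" unfolding FL_def using less.prems(1) x
      by (intro psubset_card_mono) auto
    have cR: "card FR < card F" unfolding FR_def using less.prems(1) x
      by (intro psubset_card_mono) auto
    have sL: "sum Leb FL \<le> fst x - a"
    proof (rule less.hyps[OF cL fin(1)])
      fix U assume "U \<in> FL"
      then show "a \<le> fst U \<and> fst U < snd U \<and> snd U \<le> fst x"
        using less.prems(2)[of U] unfolding FL_def prec_def by auto
    next
      fix U V assume "U \<in> FL" "V \<in> FL" "U \<noteq> V"
      then show "prec U V \<or> prec V U" using less.prems(3) unfolding FL_def by auto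
    qed (use xb in auto)
    have sR: "sum Leb FR \<le> b - snd x"
    proof (rule less.hyps[OF cR fin(2)])
      fix U assume "U \<in> FR"
      then show "snd x \<le> fst U \<and> fst U < snd U \<and> snd U \<le> b"
        using less.prems(2)[of U] unfolding FR_def prec_def by auto
    next
      fix U V assume "U \<in> FR" "V \<in> FR" "U \<noteq> V"
      then show "prec U V \<or> prec V U" using less.prems(3) unfolding FR_def by auto
    qed (use xb in auto)
    have "sum Leb F = Leb x + sum Leb FL + sum Leb FR"
      using split xn fin disj by (simp add: sum.union_disjoint)
    then show ?thesis using sL sR unfolding Leb_def by linarith
  qed
qed

lemma sum_Leb_le_sub:
  assumes "is_IP L \<beta>" "finite F" "F \<subseteq> \<beta>"
    and "\<And>U. U \<in> F \<Longrightarrow> a \<le> fst U \<and> snd U \<le> b" "a \<le> b"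
  shows "sum Leb F \<le> b - a"
proof (rule sum_Leb_le_gen[OF assms(2) _ _ assms(5)])
  fix U assume "U \<in> F"
  then show "a \<le> fst U \<and> fst U < snd U \<and> snd U \<le> b" using assms(3,4) IP_block[OF assms(1)] by blast
next
  fix U V assume "U \<in> F" "V \<in> F" "U \<noteq> V"
  then show "prec U V \<or> prec V U" using assms(3) IP_disj[OF assms(1)] by blast
qed

lemma sum_Leb_le:
  assumes "is_IP L \<beta>" "finite F" "F \<subseteq> \<beta>"
  shows "sum Leb F \<le> L"
  using sum_Leb_le_sub[OF assms, of 0 L] IP_block[OF assms(1)] IP_L[OF assms(1)] assms(3) by auto

lemma finite_long:
  assumes "is_IP L \<beta>" "h > 0"
  shows "finite {U \<in> \<beta>. Leb U > h}"
proof (rule finite_if_finite_subsets_card_bdd[THEN conjunct1])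
  fix G assume G: "G \<subseteq> {U \<in> \<beta>. Leb U > h}" "finite G"
  have "real (card G) * h = (\<Sum>U\<in>G. h)" by simp
  also have "\<dots> \<le> sum Leb G" using G by (intro sum_mono) auto
  also have "\<dots> \<le> L" using sum_Leb_le[OF assms(1) G(2)] G(1) by auto
  finally have "real (card G) \<le> L / h" using assms(2) by (simp add: field_simps)
  then show "card G \<le> nat \<lceil>L / h\<rceil>" by linarith
qed

lemma IP_countable:
  assumes "is_IP L \<beta>"
  shows "countable \<beta>"
proof -
  have eq: "\<beta> = (\<Union>n. {U \<in> \<beta>. Leb U > 1 / Suc n})"
  proof (intro equalityI subsetI)
    fix U assume "U \<in> \<beta>"
    then have "Leb U > 0" using Leb_pos assms by blast
    then obtain n where "1 / Suc n < Leb U" using nat_approx_posE by blast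
    then show "U \<in> (\<Union>n. {U \<in> \<beta>. Leb U > 1 / Suc n})" using \<open>U \<in> \<beta>\<close> by blast
  qed auto
  have cf: "countable {U \<in> \<beta>. Leb U > 1 / Suc n}" for n
    using finite_long[OF assms, of "1 / Suc n"] by (simp add: countable_finite)
  have "countable (\<Union>n. {U \<in> \<beta>. Leb U > 1 / Suc n})"
    by (rule countable_UN[OF countableI_type cf])
  then show ?thesis using eq by simp
qed



lemma block_sets: "block U \<in> sets lborel"
  unfolding block_def by simp

lemma emeasure_block: "fst U \<le> snd U \<Longrightarrow> emeasure lborel (block U) = ennreal (Leb U)"
  unfolding block_def Leb_def by simp

lemma IP_sum_approx:
  assumes IP: "is_IP L \<beta>" and e: "\<epsilon> > 0"
  shows "\<exists>F. finite F \<and> F \<subseteq> \<beta> \<and> L - \<epsilon> < sum Leb F"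
proof (rule ccontr)
  assume N: "\<not> ?thesis"
  have H: "sum Leb F \<le> L - \<epsilon>" if "finite F" "F \<subseteq> \<beta>" for F
    using N that not_less by blast
  have Le: "0 \<le> L - \<epsilon>" using H[of "{}"] by simp
  have fin: "emeasure lborel (\<Union>U\<in>F. block U) \<le> ennreal (L - \<epsilon>)" if F: "finite F" "F \<subseteq> \<beta>" for F
  proof -
    have "emeasure lborel (\<Union>U\<in>F. block U) \<le> (\<Sum>U\<in>F. emeasure lborel (block U))"
      using F(1) by (rule emeasure_subadditive_finite) (use block_sets in blast)
    also have "\<dots> = (\<Sum>U\<in>F. ennreal (Leb U))"
    proof (rule sum.cong[OF refl])
      fix U assume "U \<in> F"
      then have "fst U < snd U" using IP_block[OF IP] F(2) by blast
      then show "emeasure lborel (block U) = ennreal (Leb U)" by (intro emeasure_block) simp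
    qed
    also have "\<dots> = ennreal (sum Leb F)"
    proof (rule sum_ennreal)
      fix U assume "U \<in> F"
      then show "0 \<le> Leb U" using Leb_pos[OF IP] F(2) by fastforce
    qed
    also have "\<dots> \<le> ennreal (L - \<epsilon>)" using H[OF F] by (rule ennreal_leI)
    finally show ?thesis .
  qed
  have un: "emeasure lborel (\<Union>U\<in>\<beta>. block U) \<le> ennreal (L - \<epsilon>)"
  proof (cases "\<beta> = {}")
    case True
    then show ?thesis by simp
  next
    case False
    have cb: "countable \<beta>" by (rule IP_countable[OF IP])
    define g where "g = from_nat_into \<beta>"
    define A where "A n = (\<Union>U\<in>g ` {..<n}. block U)" for n
    have rg: "range g = \<beta>" unfolding g_def using False cb by simp
    have "(\<Union>n. A n) = (\<Union>U\<in>\<beta>. block U)"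
    proof
      show "(\<Union>n. A n) \<subseteq> (\<Union>U\<in>\<beta>. block U)" unfolding A_def using rg by blast
      show "(\<Union>U\<in>\<beta>. block U) \<subseteq> (\<Union>n. A n)"
      proof
        fix x assume "x \<in> (\<Union>U\<in>\<beta>. block U)"
        then obtain U where "U \<in> \<beta>" "x \<in> block U" by blast
        then obtain i where "g i = U" using rg by blast
        then have "x \<in> A (Suc i)" unfolding A_def using \<open>x \<in> block U\<close> by blast
        then show "x \<in> (\<Union>n. A n)" by blast
      qed
    qed
    moreover have "(SUP n. emeasure lborel (A n)) = emeasure lborel (\<Union>n. A n)"
    proof (rule SUP_emeasure_incseq)
      show "range A \<subseteq> sets lborel" unfolding A_def using block_sets by blast
      show "incseq A" unfolding A_def incseq_def by (auto, meson lessThan_iff order_less_le_trans)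
    qed
    moreover have "(SUP n. emeasure lborel (A n)) \<le> ennreal (L - \<epsilon>)"
    proof (rule SUP_least)
      fix n
      show "emeasure lborel (A n) \<le> ennreal (L - \<epsilon>)" unfolding A_def
        using fin[of "g ` {..<n}"] rg by blast
    qed
    ultimately show ?thesis by simp
  qed
  have opn: "open (\<Union>U\<in>\<beta>. block U)" unfolding block_def by auto
  then have ms: "(\<Union>U\<in>\<beta>. block U) \<in> sets lborel" by simp
  have nul: "{0..L} - (\<Union>U\<in>\<beta>. block U) \<in> null_sets lborel" using IP unfolding is_IP_def by blast
  have "ennreal L = emeasure lborel {0..L}" using IP_L[OF IP] by simp
  also have "\<dots> \<le> emeasure lborel ((\<Union>U\<in>\<beta>. block U) \<union> ({0..L} - (\<Union>U\<in>\<beta>. block U)))"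
  proof (rule emeasure_mono)
    show "{0..L} \<subseteq> (\<Union>U\<in>\<beta>. block U) \<union> ({0..L} - (\<Union>U\<in>\<beta>. block U))" by blast
    have "{0..L} - (\<Union>U\<in>\<beta>. block U) \<in> sets lborel" using nul by blast
    then show "(\<Union>U\<in>\<beta>. block U) \<union> ({0..L} - (\<Union>U\<in>\<beta>. block U)) \<in> sets lborel"
      using ms by (rule sets.Un[rotated])
  qed
  also have "\<dots> = emeasure lborel (\<Union>U\<in>\<beta>. block U)"
    by (rule emeasure_Un_null_set[OF ms nul])
  also have "\<dots> \<le> ennreal (L - \<epsilon>)" by (rule un)
  finally have "L \<le> L - \<epsilon>" using Le by simp
  then show False using e by simp
qed

lemma IPnorm_eq:
  assumes IP: "is_IP L \<beta>"
  shows "IPnorm \<beta> = L"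
proof -
  have bdd: "bdd_above (insert 0 (snd ` \<beta>))"
    using IP_block[OF IP] IP_L[OF IP] by (intro bdd_aboveI[of _ L]) auto
  have le: "IPnorm \<beta> \<le> L" unfolding IPnorm_def
    using IP_block[OF IP] IP_L[OF IP] by (intro cSup_least) auto
  have up: "snd U \<le> IPnorm \<beta>" if "U \<in> \<beta>" for U
    unfolding IPnorm_def using bdd that by (intro cSup_upper) auto
  have nn: "0 \<le> IPnorm \<beta>" unfolding IPnorm_def using bdd by (intro cSup_upper) auto
  have A: "L - \<epsilon> < IPnorm \<beta>" if e: "\<epsilon> > 0" for \<epsilon>
  proof -
    obtain F where F: "finite F" "F \<subseteq> \<beta>" "L - \<epsilon> < sum Leb F" using IP_sum_approx[OF IP e] by blast
    have "sum Leb F \<le> IPnorm \<beta> - 0"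
      using F up IP_block[OF IP] nn by (intro sum_Leb_le_sub[OF IP F(1) F(2)]) auto
    then show ?thesis using F by simp
  qed
  have "L \<le> IPnorm \<beta>"
  proof (rule ccontr)
    assume "\<not> L \<le> IPnorm \<beta>"
    then have "L - (L - IPnorm \<beta>) < IPnorm \<beta>" using A[of "L - IPnorm \<beta>"] by linarith
    then show False by simp
  qed
  then show ?thesis using le by simp
qed

lemma IP_IPnorm: "\<beta> \<in> IP \<Longrightarrow> is_IP (IPnorm \<beta>) \<beta>"
  unfolding IP_def using IPnorm_eq by auto



type_synonym mset = "((real \<times> real) \<times> (real \<times> real)) set"

definition matching :: "ipart \<Rightarrow> ipart \<Rightarrow> mset \<Rightarrow> bool" where
  "matching \<beta> \<gamma> M \<longleftrightarrow> finite M \<and> M \<subseteq> \<beta> \<times> \<gamma> \<and>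
     (\<forall>p\<in>M. \<forall>q\<in>M. p \<noteq> q \<longrightarrow> (prec (fst p) (fst q) \<and> prec (snd p) (snd q)) \<or> (prec (fst q) (fst p) \<and> prec (snd q) (snd p)))"

definition SS :: "mset \<Rightarrow> real" where
  "SS M = (\<Sum>p\<in>M. \<bar>Leb (fst p) - Leb (snd p)\<bar>)"

definition T1 :: "ipart \<Rightarrow> mset \<Rightarrow> real" where
  "T1 \<beta> M = SS M + IPnorm \<beta> - (\<Sum>p\<in>M. Leb (fst p))"

definition T2 :: "ipart \<Rightarrow> mset \<Rightarrow> real" where
  "T2 \<gamma> M = SS M + IPnorm \<gamma> - (\<Sum>p\<in>M. Leb (snd p))"

definition T3 :: "real \<Rightarrow> ipart \<Rightarrow> ipart \<Rightarrow> mset \<Rightarrow> real" where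
  "T3 \<alpha> \<beta> \<gamma> M = Sup (insert 0 ((\<lambda>p. \<bar>block_div \<alpha> \<beta> (fst p) - block_div \<alpha> \<gamma> (snd p)\<bar>) ` M))"

definition T4 :: "real \<Rightarrow> ipart \<Rightarrow> ipart \<Rightarrow> real" where
  "T4 \<alpha> \<beta> \<gamma> = \<bar>total_div \<alpha> \<beta> - total_div \<alpha> \<gamma>\<bar>"

definition dset :: "real \<Rightarrow> ipart \<Rightarrow> ipart \<Rightarrow> mset \<Rightarrow> real" where
  "dset \<alpha> \<beta> \<gamma> M = Max {T1 \<beta> M, T2 \<gamma> M, T3 \<alpha> \<beta> \<gamma> M, T4 \<alpha> \<beta> \<gamma>}"

lemma distortion_eq:
  assumes "distinct c"
  shows "distortion \<alpha> \<beta> \<gamma> c = dset \<alpha> \<beta> \<gamma> (set c)"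
  unfolding distortion_def dset_def T1_def T2_def T3_def T4_def SS_def Let_def
  using assms by (simp add: sum_list_distinct_conv_sum_set)

lemma Sup_ins0_le:
  fixes A :: "real set"
  assumes "finite A"
  shows "Sup (insert 0 A) \<le> c \<longleftrightarrow> 0 \<le> c \<and> (\<forall>a\<in>A. a \<le> c)"
  using assms by (subst cSup_le_iff) auto

lemma Sup_ins0_ge:
  fixes A :: "real set"
  assumes "finite A" "a \<in> A"
  shows "a \<le> Sup (insert 0 A)"
  using assms by (intro cSup_upper) auto

lemma Sup_ins0_nonneg:
  fixes A :: "real set"
  assumes "finite A"
  shows "0 \<le> Sup (insert 0 A)"
  using assms by (intro cSup_upper) auto

lemma dset_ge:
  shows "T1 \<beta> M \<le> dset \<alpha> \<beta> \<gamma> M" "T2 \<gamma> M \<le> dset \<alpha> \<beta> \<gamma> M"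
    "T3 \<alpha> \<beta> \<gamma> M \<le> dset \<alpha> \<beta> \<gamma> M" "T4 \<alpha> \<beta> \<gamma> \<le> dset \<alpha> \<beta> \<gamma> M"
  unfolding dset_def by (auto intro: Max_ge)

lemma dset_less:
  assumes "T1 \<beta> M < e" "T2 \<gamma> M < e" "T3 \<alpha> \<beta> \<gamma> M < e" "T4 \<alpha> \<beta> \<gamma> < e"
  shows "dset \<alpha> \<beta> \<gamma> M < e"
  unfolding dset_def using assms by (subst Max_less_iff) auto

lemma dset_le:
  assumes "T1 \<beta> M \<le> e" "T2 \<gamma> M \<le> e" "T3 \<alpha> \<beta> \<gamma> M \<le> e" "T4 \<alpha> \<beta> \<gamma> \<le> e"
  shows "dset \<alpha> \<beta> \<gamma> M \<le> e"
  unfolding dset_def using assms by (subst Max_le_iff) auto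

lemma dset_nonneg: "0 \<le> dset \<alpha> \<beta> \<gamma> M"
  using dset_ge(4)[of \<alpha> \<beta> \<gamma> M] unfolding T4_def by linarith

lemma distortion_nonneg: "0 \<le> distortion \<alpha> \<beta> \<gamma> c"
proof -
  have "\<bar>total_div \<alpha> \<beta> - total_div \<alpha> \<gamma>\<bar> \<le> distortion \<alpha> \<beta> \<gamma> c"
    unfolding distortion_def Let_def by (intro Max_ge) auto
  then show ?thesis by linarith
qed

lemma corr_nil: "correspondence \<beta> \<gamma> []"
  unfolding correspondence_def by simp

lemma d_alpha_nonneg: "0 \<le> d_alpha \<alpha> \<beta> \<gamma>"
  unfolding d_alpha_def using corr_nil distortion_nonneg
  by (intro cInf_greatest) auto

lemma corr_swap:
  "correspondence \<beta> \<gamma> c \<Longrightarrow> correspondence \<gamma> \<beta> (map prod.swap c)"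
  unfolding correspondence_def by (auto simp: sorted_wrt_map)

lemma distortion_swap:
  "distortion \<alpha> \<gamma> \<beta> (map prod.swap c) = distortion \<alpha> \<beta> \<gamma> c"
proof -
  have a: "(\<Sum>p\<leftarrow>map prod.swap c. \<bar>Leb (fst p) - Leb (snd p)\<bar>) = (\<Sum>p\<leftarrow>c. \<bar>Leb (fst p) - Leb (snd p)\<bar>)"
    by (induction c) (auto simp: abs_minus_commute)
  have b: "(\<lambda>p. \<bar>block_div \<alpha> \<gamma> (fst p) - block_div \<alpha> \<beta> (snd p)\<bar>) ` set (map prod.swap c)
         = (\<lambda>p. \<bar>block_div \<alpha> \<beta> (fst p) - block_div \<alpha> \<gamma> (snd p)\<bar>) ` set c"
    unfolding set_map image_image by (intro image_cong refl) (simp add: abs_minus_commute)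
  have c: "(\<Sum>p\<leftarrow>map prod.swap c. Leb (fst p)) = (\<Sum>p\<leftarrow>c. Leb (snd p))"
    "(\<Sum>p\<leftarrow>map prod.swap c. Leb (snd p)) = (\<Sum>p\<leftarrow>c. Leb (fst p))"
    by (induction c) auto
  have d: "\<bar>total_div \<alpha> \<gamma> - total_div \<alpha> \<beta>\<bar> = \<bar>total_div \<alpha> \<beta> - total_div \<alpha> \<gamma>\<bar>" by (rule abs_minus_commute)
  show ?thesis unfolding distortion_def Let_def a b c d
    by (simp only: insert_commute)
qed

lemma d_alpha_commute: "d_alpha \<alpha> \<beta> \<gamma> = d_alpha \<alpha> \<gamma> \<beta>"
proof -
  have "distortion \<alpha> \<beta> \<gamma> ` {c. correspondence \<beta> \<gamma> c} \<subseteq> distortion \<alpha> \<gamma> \<beta> ` {c. correspondence \<gamma> \<beta> c}"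
    for \<beta> \<gamma>
  proof
    fix x assume "x \<in> distortion \<alpha> \<beta> \<gamma> ` {c. correspondence \<beta> \<gamma> c}"
    then obtain c where "correspondence \<beta> \<gamma> c" "x = distortion \<alpha> \<beta> \<gamma> c" by blast
    then show "x \<in> distortion \<alpha> \<gamma> \<beta> ` {c. correspondence \<gamma> \<beta> c}"
      using corr_swap distortion_swap by (metis (mono_tags, lifting) image_eqI mem_Collect_eq)
  qed
  then have "distortion \<alpha> \<beta> \<gamma> ` {c. correspondence \<beta> \<gamma> c} = distortion \<alpha> \<gamma> \<beta> ` {c. correspondence \<gamma> \<beta> c}"
    by (intro equalityI) 
  then show ?thesis unfolding d_alpha_def by simp
qed

lemma sorted_wrt_distinct: "sorted_wrt R xs \<Longrightarrow> (\<And>x. x \<in> set xs \<Longrightarrow> \<not> R x x) \<Longrightarrow> distinct xs"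
  by (induction xs) auto

lemma corr_matching:
  assumes IPb: "is_IP Lb \<beta>" and IPg: "is_IP Lg \<gamma>" and C: "correspondence \<beta> \<gamma> c"
  shows "distinct c \<and> matching \<beta> \<gamma> (set c)"
proof -
  have sub: "set c \<subseteq> \<beta> \<times> \<gamma>" using C unfolding correspondence_def by (auto simp: mem_Times_iff)
  have s1: "sorted_wrt (\<lambda>p q. prec (fst p) (fst q)) c" and s2: "sorted_wrt (\<lambda>p q. prec (snd p) (snd q)) c"
    using C unfolding correspondence_def prec_def by auto
  have "distinct c"
  proof (rule sorted_wrt_distinct[OF s1])
    fix x assume "x \<in> set c"
    then have "fst x \<in> \<beta>" using sub by auto
    then show "\<not> prec (fst x) (fst x)" using IP_block[OF IPb] prec_irrefl by blast
  qed
  moreover have "(prec (fst p) (fst q) \<and> prec (snd p) (snd q)) \<or> (prec (fst q) (fst p) \<and> prec (snd q) (snd p))"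
    if pq: "p \<in> set c" "q \<in> set c" "p \<noteq> q" for p q
  proof -
    obtain i where i: "i < length c" "c ! i = p" using pq(1) by (meson in_set_conv_nth)
    obtain j where j: "j < length c" "c ! j = q" using pq(2) by (meson in_set_conv_nth)
    have ij: "i < length c" "j < length c" "c ! i = p" "c ! j = q" using i j by auto
    then have "i \<noteq> j" using pq by auto
    then show ?thesis
    proof (cases "i < j")
      case True
      then show ?thesis using s1 s2 ij unfolding sorted_wrt_iff_nth_less by blast
    next
      case False
      then have "j < i" using \<open>i \<noteq> j\<close> by simp
      then show ?thesis using s1 s2 ij unfolding sorted_wrt_iff_nth_less by blast
    qed
  qed
  ultimately show ?thesis unfolding matching_def using sub by auto
qed

lemma matching_corr:
  assumes IPb: "is_IP Lb \<beta>" and IPg: "is_IP Lg \<gamma>" and M: "matching \<beta> \<gamma> M"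
  shows "\<exists>c. correspondence \<beta> \<gamma> c \<and> distinct c \<and> set c = M"
proof -
  define k where "k p = fst (fst p)" for p :: "(real \<times> real) \<times> (real \<times> real)"
  have fM: "finite M" and sub: "M \<subseteq> \<beta> \<times> \<gamma>" using M unfolding matching_def by auto
  have ord: "(prec (fst p) (fst q) \<and> prec (snd p) (snd q)) \<or> (prec (fst q) (fst p) \<and> prec (snd q) (snd p))"
    if "p \<in> M" "q \<in> M" "p \<noteq> q" for p q using M that unfolding matching_def by blast
  have blk: "fst (fst p) < snd (fst p)" if "p \<in> M" for p
    using that sub IP_block[OF IPb] by (auto simp: mem_Times_iff)
  have klt: "k p < k q" if "p \<in> M" "q \<in> M" "prec (fst p) (fst q)" for p q
    using blk[OF that(1)] that(3) unfolding prec_def k_def by linarith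
  have inj: "inj_on k M"
  proof (rule inj_onI)
    fix p q assume pq: "p \<in> M" "q \<in> M" "k p = k q"
    show "p = q"
    proof (rule ccontr)
      assume "p \<noteq> q"
      then show False using ord[OF pq(1,2)] klt[OF pq(1,2)] klt[OF pq(2,1)] pq(3) by auto
    qed
  qed
  obtain xs where xs: "sorted_wrt (<) xs" "set xs = k ` M"
  proof -
    have "finite (k ` M)" using fM by simp
    then show ?thesis
    proof (rule finite_set_strict_sorted)
      fix l assume "sorted_wrt (<) l" "set l = k ` M"
      then show ?thesis using that by blast
    qed
  qed
  define c where "c = map (the_inv_into M k) xs"
  have mk: "map k c = xs" unfolding c_def map_map
    by (rule map_idI) (use xs(2) f_the_inv_into_f[OF inj] in auto)
  have sc: "set c = M" unfolding c_def set_map xs(2) image_image using the_inv_into_f_f[OF inj] by simp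
  have ss: "sorted_wrt (\<lambda>p q. k p < k q) c"
    using xs(1) mk by (metis sorted_wrt_map)
  have dc: "distinct c" using xs(1) mk strict_sorted_iff distinct_map by metis
  have imp: "prec (fst p) (fst q) \<and> prec (snd p) (snd q)" if "p \<in> set c" "q \<in> set c" "k p < k q" for p q
  proof -
    have "p \<noteq> q" using that by auto
    moreover have "\<not> prec (fst q) (fst p)" using klt[of q p] that sc by auto
    ultimately show ?thesis using ord[of p q] that sc by auto
  qed
  have "sorted_wrt (\<lambda>p q. snd (fst p) \<le> fst (fst q)) c"
    using imp by (intro sorted_wrt_mono_rel[OF _ ss]) (auto simp: prec_def)
  moreover have "sorted_wrt (\<lambda>p q. snd (snd p) \<le> fst (snd q)) c"
    using imp by (intro sorted_wrt_mono_rel[OF _ ss]) (auto simp: prec_def)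
  moreover have "\<forall>p\<in>set c. fst p \<in> \<beta> \<and> snd p \<in> \<gamma>" using sc sub by auto
  ultimately have "correspondence \<beta> \<gamma> c" unfolding correspondence_def by blast
  then show ?thesis using dc sc by blast
qed

lemma d_alpha_dset:
  assumes IPb: "is_IP Lb \<beta>" and IPg: "is_IP Lg \<gamma>"
  shows "d_alpha \<alpha> \<beta> \<gamma> = Inf (dset \<alpha> \<beta> \<gamma> ` {M. matching \<beta> \<gamma> M})"
proof -
  have "distortion \<alpha> \<beta> \<gamma> ` {c. correspondence \<beta> \<gamma> c} = dset \<alpha> \<beta> \<gamma> ` {M. matching \<beta> \<gamma> M}"
  proof (intro equalityI subsetI)
    fix x assume "x \<in> distortion \<alpha> \<beta> \<gamma> ` {c. correspondence \<beta> \<gamma> c}"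
    then obtain c where c: "correspondence \<beta> \<gamma> c" "x = distortion \<alpha> \<beta> \<gamma> c" by blast
    then have "distinct c" "matching \<beta> \<gamma> (set c)" using corr_matching[OF IPb IPg] by auto
    then show "x \<in> dset \<alpha> \<beta> \<gamma> ` {M. matching \<beta> \<gamma> M}" using c distortion_eq by auto
  next
    fix x assume "x \<in> dset \<alpha> \<beta> \<gamma> ` {M. matching \<beta> \<gamma> M}"
    then obtain M where M: "matching \<beta> \<gamma> M" "x = dset \<alpha> \<beta> \<gamma> M" by blast
    then obtain c where c: "correspondence \<beta> \<gamma> c" "distinct c" "set c = M"
      using matching_corr[OF IPb IPg] by blast
    have "x = distortion \<alpha> \<beta> \<gamma> c" using M(2) distortion_eq[OF c(2)] c(3) by simp
    then show "x \<in> distortion \<alpha> \<beta> \<gamma> ` {c. correspondence \<beta> \<gamma> c}" using c(1) by blast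
  qed
  then show ?thesis unfolding d_alpha_def by simp
qed

lemma matching_empty: "matching \<beta> \<gamma> {}"
  unfolding matching_def by simp

lemma d_le_dset:
  assumes IPb: "is_IP Lb \<beta>" and IPg: "is_IP Lg \<gamma>" and M: "matching \<beta> \<gamma> M"
  shows "d_alpha \<alpha> \<beta> \<gamma> \<le> dset \<alpha> \<beta> \<gamma> M"
  unfolding d_alpha_dset[OF IPb IPg]
  by (rule cInf_lower) (use M dset_nonneg in \<open>auto intro: bdd_belowI[of _ 0]\<close>)

lemma d_approx:
  assumes IPb: "is_IP Lb \<beta>" and IPg: "is_IP Lg \<gamma>" and e: "d_alpha \<alpha> \<beta> \<gamma> < e"
  shows "\<exists>M. matching \<beta> \<gamma> M \<and> dset \<alpha> \<beta> \<gamma> M < e"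
proof -
  have ne: "dset \<alpha> \<beta> \<gamma> ` {M. matching \<beta> \<gamma> M} \<noteq> {}" using matching_empty by blast
  have bb: "bdd_below (dset \<alpha> \<beta> \<gamma> ` {M. matching \<beta> \<gamma> M})"
    using dset_nonneg by (auto intro: bdd_belowI[of _ 0])
  show ?thesis using e unfolding d_alpha_dset[OF IPb IPg] cInf_less_iff[OF ne bb] by blast
qed



lemma d_self:
  assumes IP: "is_IP L \<beta>"
  shows "d_alpha \<alpha> \<beta> \<beta> = 0"
proof -
  have "d_alpha \<alpha> \<beta> \<beta> < e" if e: "e > 0" for e
  proof -
    obtain F where F: "finite F" "F \<subseteq> \<beta>" "L - e < sum Leb F" using IP_sum_approx[OF IP e] by blast
    define M where "M = (\<lambda>U. (U, U)) ` F"
    have inj: "inj_on (\<lambda>U. (U, U)) F" by (auto intro: inj_onI)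
    have mM: "matching \<beta> \<beta> M"
      unfolding matching_def
    proof (intro conjI ballI impI)
      show "finite M" unfolding M_def using F(1) by simp
      show "M \<subseteq> \<beta> \<times> \<beta>" unfolding M_def using F(2) by blast
      fix p q assume pq: "p \<in> M" "q \<in> M" "p \<noteq> q"
      then obtain U V where "p = (U, U)" "q = (V, V)" "U \<in> F" "V \<in> F" unfolding M_def by blast
      moreover have "U \<noteq> V" using pq calculation by blast
      ultimately show "(prec (fst p) (fst q) \<and> prec (snd p) (snd q)) \<or> (prec (fst q) (fst p) \<and> prec (snd q) (snd p))"
        using IP_disj[OF IP, of U V] F(2) by auto
    qed
    have SS0: "SS M = 0" unfolding SS_def M_def by (simp add: sum.reindex[OF inj])
    have s1: "(\<Sum>p\<in>M. Leb (fst p)) = sum Leb F" unfolding M_def by (simp add: sum.reindex[OF inj])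
    have s2: "(\<Sum>p\<in>M. Leb (snd p)) = sum Leb F" unfolding M_def by (simp add: sum.reindex[OF inj])
    have nb: "IPnorm \<beta> = L" by (rule IPnorm_eq[OF IP])
    have "T1 \<beta> M < e" unfolding T1_def SS0 s1 nb using F by simp
    moreover have "T2 \<beta> M < e" unfolding T2_def SS0 s2 nb using F by simp
    moreover have "T3 \<alpha> \<beta> \<beta> M < e"
    proof -
      have "(\<lambda>p. \<bar>block_div \<alpha> \<beta> (fst p) - block_div \<alpha> \<beta> (snd p)\<bar>) ` M \<subseteq> {0}" unfolding M_def by auto
      then have eq: "insert 0 ((\<lambda>p. \<bar>block_div \<alpha> \<beta> (fst p) - block_div \<alpha> \<beta> (snd p)\<bar>) ` M) = {0}" by blast
      show ?thesis unfolding T3_def eq using e by simp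
    qed
    moreover have "T4 \<alpha> \<beta> \<beta> < e" unfolding T4_def using e by simp
    ultimately have "dset \<alpha> \<beta> \<beta> M < e" by (rule dset_less)
    then show ?thesis using d_le_dset[OF IP IP mM, of \<alpha>] by linarith
  qed
  then have "d_alpha \<alpha> \<beta> \<beta> \<le> 0" by (metis less_irrefl linorder_not_le)
  then show ?thesis using d_alpha_nonneg[of \<alpha> \<beta> \<beta>] by linarith
qed

lemma matching_sub: "matching \<beta> \<gamma> M \<Longrightarrow> M \<subseteq> \<beta> \<times> \<gamma>"
  unfolding matching_def by blast

lemma matching_fin: "matching \<beta> \<gamma> M \<Longrightarrow> finite M"
  unfolding matching_def by blast

lemma matching_ord:
  "matching \<beta> \<gamma> M \<Longrightarrow> p \<in> M \<Longrightarrow> q \<in> M \<Longrightarrow> p \<noteq> q \<Longrightarrow>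
   (prec (fst p) (fst q) \<and> prec (snd p) (snd q)) \<or> (prec (fst q) (fst p) \<and> prec (snd q) (snd p))"
  unfolding matching_def by blast

lemma matching_fun:
  assumes IPb: "is_IP Lb \<beta>" and IPg: "is_IP Lg \<gamma>" and M: "matching \<beta> \<gamma> M"
    and pq: "p \<in> M" "q \<in> M"
  shows "fst p = fst q \<Longrightarrow> p = q" and "snd p = snd q \<Longrightarrow> p = q"
proof -
  have b: "fst (fst p) < snd (fst p)" "fst (snd p) < snd (snd p)"
    using matching_sub[OF M] pq IP_block[OF IPb] IP_block[OF IPg] by (auto simp: mem_Times_iff)
  show "fst p = fst q \<Longrightarrow> p = q"
  proof (rule ccontr)
    assume "fst p = fst q" "p \<noteq> q"
    then show False using matching_ord[OF M pq \<open>p \<noteq> q\<close>] prec_irrefl[OF b(1)] by auto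
  qed
  show "snd p = snd q \<Longrightarrow> p = q"
  proof (rule ccontr)
    assume "snd p = snd q" "p \<noteq> q"
    then show False using matching_ord[OF M pq \<open>p \<noteq> q\<close>] prec_irrefl[OF b(2)] by auto
  qed
qed

lemma converse_swap: "converse M = prod.swap ` M"
  by (rule set_eqI) (auto simp: image_iff intro: bexI[of _ "prod.swap _"])

lemma matching_converse:
  assumes M: "matching \<beta> \<gamma> M"
  shows "matching \<gamma> \<beta> (converse M)"
  using M unfolding matching_def by (auto simp: converse_swap)

lemma T1_converse: "T1 \<gamma> (converse M) = T2 \<gamma> M"
proof -
  have inj: "inj_on prod.swap M" by (auto intro: inj_onI)
  show ?thesis unfolding T1_def T2_def SS_def converse_swap sum.reindex[OF inj]
    by (simp add: abs_minus_commute)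
qed

lemma matching_comp:
  assumes IPb: "is_IP Lb \<beta>" and IPg: "is_IP Lg \<gamma>" and IPd: "is_IP Ld \<delta>"
    and M1: "matching \<beta> \<gamma> M1" and M2: "matching \<gamma> \<delta> M2"
  shows "matching \<beta> \<delta> (M1 O M2)"
proof -
  have fin: "finite (M1 O M2)" using matching_fin[OF M1] matching_fin[OF M2] by (rule finite_relcomp)
  have sub: "M1 O M2 \<subseteq> \<beta> \<times> \<delta>" using matching_sub[OF M1] matching_sub[OF M2] by blast
  have ord: "(prec (fst p) (fst q) \<and> prec (snd p) (snd q)) \<or> (prec (fst q) (fst p) \<and> prec (snd q) (snd p))"
    if p: "p \<in> M1 O M2" and q: "q \<in> M1 O M2" and pq: "p \<noteq> q" for p q
  proof -
    obtain U W where pUW: "p = (U, W)" by (cases p)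
    obtain U' W' where qUW: "q = (U', W')" by (cases q)
    obtain V where V: "(U, V) \<in> M1" "(V, W) \<in> M2" using p pUW by blast
    obtain V' where V': "(U', V') \<in> M1" "(V', W') \<in> M2" using q qUW by blast
    have bV: "fst V < snd V" "fst V' < snd V'"
      using V V' matching_sub[OF M1] IP_block[OF IPg] by (auto simp: mem_Times_iff)
    have "V \<noteq> V'"
    proof
      assume "V = V'"
      then have "U = U'" using matching_fun(2)[OF IPb IPg M1 V(1) V'(1)] by simp
      moreover have "W = W'" using matching_fun(1)[OF IPg IPd M2 V(2) V'(2)] \<open>V = V'\<close> by simp
      ultimately show False using pq pUW qUW by simp
    qed
    then have n1: "(U, V) \<noteq> (U', V')" and n2: "(V, W) \<noteq> (V', W')" by auto
    have o1: "(prec U U' \<and> prec V V') \<or> (prec U' U \<and> prec V' V)" using matching_ord[OF M1 V(1) V'(1) n1] by simp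
    have o2: "(prec V V' \<and> prec W W') \<or> (prec V' V \<and> prec W' W)" using matching_ord[OF M2 V(2) V'(2) n2] by simp
    show ?thesis using o1 o2 prec_asym[OF bV(1) bV(2)] prec_asym[OF bV(2) bV(1)] pUW qUW by auto
  qed
  show ?thesis unfolding matching_def using fin sub ord by blast
qed



lemma T1_comp:
  assumes IPb: "is_IP Lb \<beta>" and IPg: "is_IP Lg \<gamma>" and IPd: "is_IP Ld \<delta>"
    and M1: "matching \<beta> \<gamma> M1" and M2: "matching \<gamma> \<delta> M2"
  shows "T1 \<beta> (M1 O M2) \<le> T1 \<beta> M1 + T1 \<gamma> M2"
proof -
  define C :: "((real \<times> real) \<times> (real \<times> real) \<times> (real \<times> real)) set"
    where "C = {(U, V, W) | U V W. (U, V) \<in> M1 \<and> (V, W) \<in> M2}"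
  define f12 where "f12 = (\<lambda>(U::real \<times> real, V::real \<times> real, W::real \<times> real). (U, V))"
  define f13 where "f13 = (\<lambda>(U::real \<times> real, V::real \<times> real, W::real \<times> real). (U, W))"
  define f23 where "f23 = (\<lambda>(U::real \<times> real, V::real \<times> real, W::real \<times> real). (V, W))"
  define d :: "(real \<times> real) \<times> (real \<times> real) \<Rightarrow> real" where "d p = \<bar>Leb (fst p) - Leb (snd p)\<bar>" for p
  have fM1: "finite M1" and fM2: "finite M2" using M1 M2 by (auto dest: matching_fin)
  have "C \<subseteq> (\<lambda>(p, q). (fst p, snd p, snd q)) ` (M1 \<times> M2)"
  proof
    fix x assume "x \<in> C"
    then obtain U V W where x: "x = (U, V, W)" "(U, V) \<in> M1" "(V, W) \<in> M2" unfolding C_def by blast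
    then have "((U, V), (V, W)) \<in> M1 \<times> M2" by simp
    then show "x \<in> (\<lambda>(p, q). (fst p, snd p, snd q)) ` (M1 \<times> M2)" unfolding x(1) by force
  qed
  then have finC: "finite C" using fM1 fM2 by (meson finite_SigmaI finite_imageI finite_subset)
  have comp: "M1 O M2 = f13 ` C" unfolding C_def f13_def by (auto simp: image_iff) blast
  define A where "A = f12 ` C"
  define B2 where "B2 = f23 ` C"
  have AM1: "A \<subseteq> M1" unfolding A_def C_def f12_def by auto
  have B2M2: "B2 \<subseteq> M2" unfolding B2_def C_def f23_def by auto
  have inj13: "inj_on f13 C"
  proof (rule inj_onI)
    fix x y assume xy: "x \<in> C" "y \<in> C" "f13 x = f13 y"
    obtain U V W where x: "x = (U, V, W)" "(U, V) \<in> M1" "(V, W) \<in> M2" using xy(1) unfolding C_def by blast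
    obtain U' V' W' where y: "y = (U', V', W')" "(U', V') \<in> M1" "(V', W') \<in> M2" using xy(2) unfolding C_def by blast
    have "U = U'" "W = W'" using xy(3) x y unfolding f13_def by auto
    then have "(U, V) = (U', V')" using matching_fun(1)[OF IPb IPg M1 x(2) y(2)] by simp
    then show "x = y" using x y \<open>W = W'\<close> by simp
  qed
  have inj12: "inj_on f12 C"
  proof (rule inj_onI)
    fix x y assume xy: "x \<in> C" "y \<in> C" "f12 x = f12 y"
    obtain U V W where x: "x = (U, V, W)" "(U, V) \<in> M1" "(V, W) \<in> M2" using xy(1) unfolding C_def by blast
    obtain U' V' W' where y: "y = (U', V', W')" "(U', V') \<in> M1" "(V', W') \<in> M2" using xy(2) unfolding C_def by blast
    have "U = U'" "V = V'" using xy(3) x y unfolding f12_def by auto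
    then have "(V, W) = (V', W')" using matching_fun(1)[OF IPg IPd M2 x(3) y(3)] by simp
    then show "x = y" using x y \<open>U = U'\<close> by simp
  qed
  have inj23: "inj_on f23 C"
  proof (rule inj_onI)
    fix x y assume xy: "x \<in> C" "y \<in> C" "f23 x = f23 y"
    obtain U V W where x: "x = (U, V, W)" "(U, V) \<in> M1" "(V, W) \<in> M2" using xy(1) unfolding C_def by blast
    obtain U' V' W' where y: "y = (U', V', W')" "(U', V') \<in> M1" "(V', W') \<in> M2" using xy(2) unfolding C_def by blast
    have "V = V'" "W = W'" using xy(3) x y unfolding f23_def by auto
    then have "(U, V) = (U', V')" using matching_fun(2)[OF IPb IPg M1 x(2) y(2)] by simp
    then show "x = y" using x y \<open>W = W'\<close> by simp
  qed
  have e13: "sum g (M1 O M2) = sum (g \<circ> f13) C" for g :: "_ \<Rightarrow> real"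
    unfolding comp by (rule sum.reindex[OF inj13])
  have e12: "sum g A = sum (g \<circ> f12) C" for g :: "_ \<Rightarrow> real"
    unfolding A_def by (rule sum.reindex[OF inj12])
  have e23: "sum g B2 = sum (g \<circ> f23) C" for g :: "_ \<Rightarrow> real"
    unfolding B2_def by (rule sum.reindex[OF inj23])
  have SSc: "SS (M1 O M2) \<le> sum d A + sum d B2"
  proof -
    have "SS (M1 O M2) = sum (d \<circ> f13) C" unfolding SS_def d_def[abs_def] by (rule e13)
    also have "\<dots> \<le> sum (\<lambda>x. (d \<circ> f12) x + (d \<circ> f23) x) C"
    proof (rule sum_mono)
      fix x assume "x \<in> C"
      obtain U V W where x: "x = (U, V, W)" by (cases x)
      show "(d \<circ> f13) x \<le> (d \<circ> f12) x + (d \<circ> f23) x"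
        unfolding x d_def f12_def f13_def f23_def by simp
    qed
    also have "\<dots> = sum d A + sum d B2" unfolding e12 e23 by (simp add: sum.distrib)
    finally show ?thesis .
  qed
  have sfst: "(\<Sum>p\<in>M1 O M2. Leb (fst p)) = (\<Sum>p\<in>A. Leb (fst p))"
    unfolding e13 e12 by (rule sum.cong) (auto simp: f12_def f13_def)
  define B where "B = M1 - A"
  have SS1: "SS M1 = sum d A + sum d B"
    unfolding SS_def d_def[abs_def] B_def using sum.subset_diff[OF AM1 fM1, of "\<lambda>p. \<bar>Leb (fst p) - Leb (snd p)\<bar>"] by linarith
  have L1: "(\<Sum>p\<in>M1. Leb (fst p)) = (\<Sum>p\<in>A. Leb (fst p)) + (\<Sum>p\<in>B. Leb (fst p))"
    unfolding B_def using sum.subset_diff[OF AM1 fM1, of "\<lambda>p. Leb (fst p)"] by linarith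
  have SS2: "sum d B2 \<le> SS M2"
    unfolding SS_def d_def[abs_def] using B2M2 fM2 by (intro sum_mono2) auto
  have LB: "(\<Sum>p\<in>B. Leb (fst p)) \<le> sum d B + (\<Sum>p\<in>B. Leb (snd p))"
    unfolding sum.distrib[symmetric] d_def by (intro sum_mono) linarith
  have key: "(\<Sum>p\<in>B. Leb (snd p)) + (\<Sum>p\<in>M2. Leb (fst p)) \<le> IPnorm \<gamma>"
  proof -
    have BM1: "B \<subseteq> M1" unfolding B_def by blast
    have finB: "finite B" using BM1 fM1 finite_subset by blast
    have injB: "inj_on snd B"
      by (rule inj_onI) (use matching_fun(2)[OF IPb IPg M1] BM1 in blast)
    have injM2: "inj_on fst M2"
      by (rule inj_onI) (use matching_fun(1)[OF IPg IPd M2] in blast)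
    have disj: "snd ` B \<inter> fst ` M2 = {}"
    proof (rule ccontr)
      assume "snd ` B \<inter> fst ` M2 \<noteq> {}"
      then obtain p q where pq: "p \<in> B" "q \<in> M2" "snd p = fst q" by force
      then have "(fst p, snd p, snd q) \<in> C" unfolding C_def B_def
        by (metis (mono_tags, lifting) Diff_iff mem_Collect_eq prod.collapse)
      then have "f12 (fst p, snd p, snd q) \<in> A" unfolding A_def by blast
      then have "p \<in> A" unfolding f12_def by simp
      then show False using pq(1) unfolding B_def by blast
    qed
    have sub: "snd ` B \<union> fst ` M2 \<subseteq> \<gamma>" using matching_sub[OF M1] matching_sub[OF M2] BM1 by auto
    have "(\<Sum>p\<in>B. Leb (snd p)) + (\<Sum>p\<in>M2. Leb (fst p)) = sum Leb (snd ` B) + sum Leb (fst ` M2)"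
      using sum.reindex[OF injB, of Leb] sum.reindex[OF injM2, of Leb] by simp
    also have "\<dots> = sum Leb (snd ` B \<union> fst ` M2)"
      using finB fM2 disj by (simp add: sum.union_disjoint)
    also have "\<dots> \<le> Lg" using sum_Leb_le[OF IPg _ sub] finB fM2 by simp
    finally show ?thesis using IPnorm_eq[OF IPg] by simp
  qed
  show ?thesis
    unfolding T1_def using SSc sfst SS1 L1 SS2 LB key by linarith
qed

lemma dset_comp:
  assumes IPb: "is_IP Lb \<beta>" and IPg: "is_IP Lg \<gamma>" and IPd: "is_IP Ld \<delta>"
    and M1: "matching \<beta> \<gamma> M1" and M2: "matching \<gamma> \<delta> M2"
  shows "dset \<alpha> \<beta> \<delta> (M1 O M2) \<le> dset \<alpha> \<beta> \<gamma> M1 + dset \<alpha> \<gamma> \<delta> M2"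
proof (rule dset_le)
  have "T1 \<beta> (M1 O M2) \<le> T1 \<beta> M1 + T1 \<gamma> M2" by (rule T1_comp[OF IPb IPg IPd M1 M2])
  then show "T1 \<beta> (M1 O M2) \<le> dset \<alpha> \<beta> \<gamma> M1 + dset \<alpha> \<gamma> \<delta> M2"
    using dset_ge(1)[of \<beta> M1 \<alpha> \<gamma>] dset_ge(1)[of \<gamma> M2 \<alpha> \<delta>] by linarith
next
  have "T1 \<delta> (converse M2 O converse M1) \<le> T1 \<delta> (converse M2) + T1 \<gamma> (converse M1)"
    by (rule T1_comp[OF IPd IPg IPb matching_converse[OF M2] matching_converse[OF M1]])
  then have "T2 \<delta> (M1 O M2) \<le> T2 \<delta> M2 + T2 \<gamma> M1"
    unfolding converse_relcomp[symmetric] T1_converse .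
  then show "T2 \<delta> (M1 O M2) \<le> dset \<alpha> \<beta> \<gamma> M1 + dset \<alpha> \<gamma> \<delta> M2"
    using dset_ge(2)[of \<gamma> M1 \<alpha> \<beta>] dset_ge(2)[of \<delta> M2 \<alpha> \<gamma>] by linarith
next
  have fin1: "finite M1" and fin2: "finite M2" using M1 M2 by (auto dest: matching_fin)
  have fin: "finite (M1 O M2)" using fin1 fin2 by (rule finite_relcomp)
  have t3: "T3 \<alpha> \<beta> \<delta> (M1 O M2) \<le> T3 \<alpha> \<beta> \<gamma> M1 + T3 \<alpha> \<gamma> \<delta> M2"
    unfolding T3_def
  proof (subst Sup_ins0_le, use fin in simp, intro conjI ballI)
    show "0 \<le> Sup (insert 0 ((\<lambda>p. \<bar>block_div \<alpha> \<beta> (fst p) - block_div \<alpha> \<gamma> (snd p)\<bar>) ` M1)) +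
      Sup (insert 0 ((\<lambda>p. \<bar>block_div \<alpha> \<gamma> (fst p) - block_div \<alpha> \<delta> (snd p)\<bar>) ` M2))"
      using Sup_ins0_nonneg fin1 fin2 by (simp add: add_nonneg_nonneg)
    fix a assume "a \<in> (\<lambda>p. \<bar>block_div \<alpha> \<beta> (fst p) - block_div \<alpha> \<delta> (snd p)\<bar>) ` (M1 O M2)"
    then obtain U V W where a: "a = \<bar>block_div \<alpha> \<beta> U - block_div \<alpha> \<delta> W\<bar>" "(U, V) \<in> M1" "(V, W) \<in> M2"
      by auto
    have 1: "\<bar>block_div \<alpha> \<beta> U - block_div \<alpha> \<gamma> V\<bar> \<le> Sup (insert 0 ((\<lambda>p. \<bar>block_div \<alpha> \<beta> (fst p) - block_div \<alpha> \<gamma> (snd p)\<bar>) ` M1))"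
      using a(2) fin1 by (intro Sup_ins0_ge) force+
    have 2: "\<bar>block_div \<alpha> \<gamma> V - block_div \<alpha> \<delta> W\<bar> \<le> Sup (insert 0 ((\<lambda>p. \<bar>block_div \<alpha> \<gamma> (fst p) - block_div \<alpha> \<delta> (snd p)\<bar>) ` M2))"
      using a(3) fin2 by (intro Sup_ins0_ge) force+
    show "a \<le> Sup (insert 0 ((\<lambda>p. \<bar>block_div \<alpha> \<beta> (fst p) - block_div \<alpha> \<gamma> (snd p)\<bar>) ` M1)) +
      Sup (insert 0 ((\<lambda>p. \<bar>block_div \<alpha> \<gamma> (fst p) - block_div \<alpha> \<delta> (snd p)\<bar>) ` M2))"
      using 1 2 a(1) by linarith
  qed
  then show "T3 \<alpha> \<beta> \<delta> (M1 O M2) \<le> dset \<alpha> \<beta> \<gamma> M1 + dset \<alpha> \<gamma> \<delta> M2"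
    using dset_ge(3)[of \<alpha> \<beta> \<gamma> M1] dset_ge(3)[of \<alpha> \<gamma> \<delta> M2] by linarith
next
  have "T4 \<alpha> \<beta> \<delta> \<le> T4 \<alpha> \<beta> \<gamma> + T4 \<alpha> \<gamma> \<delta>" unfolding T4_def by linarith
  then show "T4 \<alpha> \<beta> \<delta> \<le> dset \<alpha> \<beta> \<gamma> M1 + dset \<alpha> \<gamma> \<delta> M2"
    using dset_ge(4)[of \<alpha> \<beta> \<gamma> M1] dset_ge(4)[of \<alpha> \<gamma> \<delta> M2] by linarith
qed

lemma d_triangle:
  assumes IPb: "is_IP Lb \<beta>" and IPg: "is_IP Lg \<gamma>" and IPd: "is_IP Ld \<delta>"
  shows "d_alpha \<alpha> \<beta> \<delta> \<le> d_alpha \<alpha> \<beta> \<gamma> + d_alpha \<alpha> \<gamma> \<delta>"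
proof (rule field_le_epsilon)
  fix e :: real assume e: "0 < e"
  obtain M1 where M1: "matching \<beta> \<gamma> M1" "dset \<alpha> \<beta> \<gamma> M1 < d_alpha \<alpha> \<beta> \<gamma> + e/2"
    using d_approx[OF IPb IPg, of \<alpha> "d_alpha \<alpha> \<beta> \<gamma> + e/2"] e by auto
  obtain M2 where M2: "matching \<gamma> \<delta> M2" "dset \<alpha> \<gamma> \<delta> M2 < d_alpha \<alpha> \<gamma> \<delta> + e/2"
    using d_approx[OF IPg IPd, of \<alpha> "d_alpha \<alpha> \<gamma> \<delta> + e/2"] e by auto
  have "d_alpha \<alpha> \<beta> \<delta> \<le> dset \<alpha> \<beta> \<delta> (M1 O M2)"
    by (rule d_le_dset[OF IPb IPd matching_comp[OF IPb IPg IPd M1(1) M2(1)]])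
  also have "\<dots> \<le> dset \<alpha> \<beta> \<gamma> M1 + dset \<alpha> \<gamma> \<delta> M2"
    by (rule dset_comp[OF IPb IPg IPd M1(1) M2(1)])
  finally show "d_alpha \<alpha> \<beta> \<delta> \<le> d_alpha \<alpha> \<beta> \<gamma> + d_alpha \<alpha> \<gamma> \<delta> + e"
    using M1(2) M2(2) by linarith
qed



lemma sum_fst_le:
  assumes IPb: "is_IP Lb \<beta>" and IPg: "is_IP Lg \<gamma>" and M: "matching \<beta> \<gamma> M"
  shows "(\<Sum>p\<in>M. Leb (fst p)) = sum Leb (fst ` M)" and "inj_on fst M"
proof -
  show inj: "inj_on fst M" by (rule inj_onI) (use matching_fun(1)[OF IPb IPg M] in blast)
  show "(\<Sum>p\<in>M. Leb (fst p)) = sum Leb (fst ` M)" using sum.reindex[OF inj, of Leb] by simp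
qed

lemma T1_ge_SS:
  assumes IPb: "is_IP Lb \<beta>" and IPg: "is_IP Lg \<gamma>" and M: "matching \<beta> \<gamma> M"
  shows "SS M \<le> T1 \<beta> M"
proof -
  have "(\<Sum>p\<in>M. Leb (fst p)) = sum Leb (fst ` M)" by (rule sum_fst_le[OF IPb IPg M])
  also have "\<dots> \<le> Lb" using matching_sub[OF M] matching_fin[OF M] by (intro sum_Leb_le[OF IPb]) auto
  finally show ?thesis unfolding T1_def using IPnorm_eq[OF IPb] by linarith
qed

lemma SS_ge:
  assumes M: "matching \<beta> \<gamma> M" and p: "p \<in> M"
  shows "\<bar>Leb (fst p) - Leb (snd p)\<bar> \<le> SS M"
  unfolding SS_def using matching_fin[OF M] p by (intro member_le_sum) auto

lemma unmatched:
  assumes IPb: "is_IP Lb \<beta>" and IPg: "is_IP Lg \<gamma>" and M: "matching \<beta> \<gamma> M"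
    and U: "U \<in> \<beta>" "U \<notin> fst ` M"
  shows "Leb U \<le> T1 \<beta> M"
proof -
  have fin: "finite (fst ` M)" using matching_fin[OF M] by simp
  have "Leb U + (\<Sum>p\<in>M. Leb (fst p)) = sum Leb (insert U (fst ` M))"
    using sum_fst_le(1)[OF IPb IPg M] U(2) fin by simp
  also have "\<dots> \<le> Lb" using matching_sub[OF M] fin U(1) by (intro sum_Leb_le[OF IPb]) auto
  finally have "Leb U + (\<Sum>p\<in>M. Leb (fst p)) \<le> Lb" .
  moreover have "0 \<le> SS M" unfolding SS_def by (intro sum_nonneg) simp
  ultimately show ?thesis unfolding T1_def using IPnorm_eq[OF IPb] by linarith
qed

lemma pos_lemma:
  assumes IPb: "is_IP Lb \<beta>" and IPg: "is_IP Lg \<gamma>" and M: "matching \<beta> \<gamma> M"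
    and UV: "(U, V) \<in> M"
  shows "fst U \<le> fst V + T1 \<beta> M"
proof (rule field_le_epsilon)
  fix \<eta> :: real assume eta: "0 < \<eta>"
  have Ub: "U \<in> \<beta>" and Vg: "V \<in> \<gamma>" using matching_sub[OF M] UV by auto
  have bU: "0 \<le> fst U" "fst U < snd U" "snd U \<le> Lb" using IP_block[OF IPb Ub] by auto
  have bV: "0 \<le> fst V" "fst V < snd V" "snd V \<le> Lg" using IP_block[OF IPg Vg] by auto
  have fM: "finite M" by (rule matching_fin[OF M])
  obtain F where F: "finite F" "F \<subseteq> \<beta>" "Lb - \<eta> < sum Leb F" using IP_sum_approx[OF IPb eta] by blast
  define FL where "FL = {U' \<in> F. prec U' U}"
  define FR where "FR = F - FL"
  define FL1 where "FL1 = FL \<inter> fst ` M"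
  define FL2 where "FL2 = FL - fst ` M"
  define Ml where "Ml = {p \<in> M. prec (fst p) U}"
  have finFL: "finite FL" "finite FR" "finite FL1" "finite FL2" "finite Ml"
    unfolding FL_def FR_def FL1_def FL2_def Ml_def using F(1) fM by auto
  have sF: "sum Leb F = sum Leb FL1 + sum Leb FL2 + sum Leb FR"
  proof -
    have FLF: "FL \<subseteq> F" unfolding FL_def by blast
    have "sum Leb F = sum Leb FL + sum Leb FR"
      using sum.subset_diff[OF FLF F(1), of Leb] unfolding FR_def by linarith
    moreover have FL1s: "FL1 \<subseteq> FL" unfolding FL1_def by blast
    moreover have FL2e: "FL - FL1 = FL2" unfolding FL1_def FL2_def by blast
    ultimately have "sum Leb FL = sum Leb FL1 + sum Leb FL2"
      using sum.subset_diff[OF FL1s finFL(1), of Leb] unfolding FL2e by linarith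
    then show ?thesis using \<open>sum Leb F = sum Leb FL + sum Leb FR\<close> by linarith
  qed
  have sFR: "sum Leb FR \<le> Lb - fst U"
  proof (rule sum_Leb_le_sub[OF IPb finFL(2)])
    show "FR \<subseteq> \<beta>" unfolding FR_def using F(2) by blast
    show "fst U \<le> Lb" using bU by simp
    fix U' assume U': "U' \<in> FR"
    then have U'b: "U' \<in> \<beta>" and np: "\<not> prec U' U" unfolding FR_def FL_def using F(2) by auto
    have "fst U \<le> fst U'"
    proof (cases "U' = U")
      case True then show ?thesis by simp
    next
      case False
      then have "prec U U'" using IP_disj[OF IPb U'b Ub] np by blast
      then show ?thesis using bU unfolding prec_def by simp
    qed
    then show "fst U \<le> fst U' \<and> snd U' \<le> Lb" using IP_block[OF IPb U'b] by simp
  qed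
  have sFL2: "sum Leb FL2 \<le> Lb - (\<Sum>p\<in>M. Leb (fst p))"
  proof -
    have "sum Leb FL2 + sum Leb (fst ` M) = sum Leb (FL2 \<union> fst ` M)"
      using finFL(4) fM by (intro sum.union_disjoint[symmetric]) (auto simp: FL2_def)
    also have "\<dots> \<le> Lb"
      using finFL(4) fM matching_sub[OF M] F(2) unfolding FL2_def FL_def
      by (intro sum_Leb_le[OF IPb]) auto
    finally show ?thesis using sum_fst_le(1)[OF IPb IPg M] by simp
  qed
  have sFL1: "sum Leb FL1 \<le> (\<Sum>p\<in>Ml. Leb (fst p))"
  proof -
    have injMl: "inj_on fst Ml" using sum_fst_le(2)[OF IPb IPg M] unfolding Ml_def
      by (rule inj_on_subset) auto
    have sub: "FL1 \<subseteq> fst ` Ml" unfolding FL1_def FL_def Ml_def by auto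
    have nn: "0 \<le> Leb W" if "W \<in> fst ` Ml - FL1" for W
    proof -
      have "W \<in> \<beta>" using matching_sub[OF M] that unfolding Ml_def by auto
      then show ?thesis using Leb_pos[OF IPb] less_imp_le by blast
    qed
    have "sum Leb FL1 \<le> sum Leb (fst ` Ml)"
      by (rule sum_mono2[OF _ sub nn]) (use finFL(5) in simp)
    also have "\<dots> = (\<Sum>p\<in>Ml. Leb (fst p))" using sum.reindex[OF injMl, of Leb] by simp
    finally show ?thesis .
  qed
  have sMl: "(\<Sum>p\<in>Ml. Leb (fst p)) \<le> SS M + (\<Sum>p\<in>Ml. Leb (snd p))"
  proof -
    have "(\<Sum>p\<in>Ml. Leb (fst p)) \<le> (\<Sum>p\<in>Ml. \<bar>Leb (fst p) - Leb (snd p)\<bar> + Leb (snd p))"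
      by (intro sum_mono) linarith
    also have "\<dots> = (\<Sum>p\<in>Ml. \<bar>Leb (fst p) - Leb (snd p)\<bar>) + (\<Sum>p\<in>Ml. Leb (snd p))"
      by (simp add: sum.distrib)
    also have "(\<Sum>p\<in>Ml. \<bar>Leb (fst p) - Leb (snd p)\<bar>) \<le> SS M"
      unfolding SS_def Ml_def using fM by (intro sum_mono2) auto
    finally show ?thesis by simp
  qed
  have sMl2: "(\<Sum>p\<in>Ml. Leb (snd p)) \<le> fst V"
  proof -
    have injs: "inj_on snd Ml"
      by (rule inj_onI) (use matching_fun(2)[OF IPb IPg M] in \<open>auto simp: Ml_def\<close>)
    have "(\<Sum>p\<in>Ml. Leb (snd p)) = sum Leb (snd ` Ml)" using sum.reindex[OF injs, of Leb] by simp
    also have "\<dots> \<le> fst V - 0"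
    proof (rule sum_Leb_le_sub[OF IPg])
      show "finite (snd ` Ml)" using finFL(5) by simp
      show "snd ` Ml \<subseteq> \<gamma>" using matching_sub[OF M] unfolding Ml_def by auto
      show "0 \<le> fst V" using bV by simp
      fix W assume "W \<in> snd ` Ml"
      then obtain p where p: "p \<in> M" "prec (fst p) U" "W = snd p" unfolding Ml_def by auto
      have pb: "fst p \<in> \<beta>" "snd p \<in> \<gamma>" using matching_sub[OF M] p(1) by auto
      have "p \<noteq> (U, V)" using p(2) prec_irrefl[of U] bU by auto
      then have o: "(prec (fst p) U \<and> prec (snd p) V) \<or> (prec U (fst p) \<and> prec V (snd p))"
        using matching_ord[OF M p(1) UV] by simp
      have "\<not> prec U (fst p)"
        using prec_asym[of "fst p" U] p(2) IP_block[OF IPb pb(1)] bU by auto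
      then have "prec (snd p) V" using o by blast
      then show "0 \<le> fst W \<and> snd W \<le> fst V" using p(3) IP_block[OF IPg pb(2)] unfolding prec_def by simp
    qed
    finally show ?thesis by simp
  qed
  have "Lb - \<eta> < fst V + SS M + Lb - (\<Sum>p\<in>M. Leb (fst p)) + Lb - fst U"
    using F(3) sF sFR sFL2 sFL1 sMl sMl2 by linarith
  then show "fst U \<le> fst V + T1 \<beta> M + \<eta>"
    unfolding T1_def using IPnorm_eq[OF IPb] by linarith
qed

lemma d_zero_sub:
  assumes IPb: "is_IP Lb \<beta>" and IPg: "is_IP Lg \<gamma>" and d0: "d_alpha \<alpha> \<beta> \<gamma> = 0"
  shows "\<beta> \<subseteq> \<gamma>"
proof
  fix U assume Ub: "U \<in> \<beta>"
  define l where "l = Leb U"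
  have l: "0 < l" unfolding l_def using Leb_pos[OF IPb Ub] .
  define G where "G = {V \<in> \<gamma>. Leb V > l/2}"
  have finG: "finite G" unfolding G_def using finite_long[OF IPg, of "l/2"] l by simp
  define D where "D = (\<lambda>V. \<bar>fst V - fst U\<bar> + \<bar>snd V - snd U\<bar>) ` (G - {U})"
  have finD: "finite D" unfolding D_def using finG by simp
  have Dpos: "x > 0" if "x \<in> D" for x
  proof -
    obtain V where V: "V \<in> G" "V \<noteq> U" "x = \<bar>fst V - fst U\<bar> + \<bar>snd V - snd U\<bar>"
      using \<open>x \<in> D\<close> unfolding D_def by blast
    have "fst V \<noteq> fst U \<or> snd V \<noteq> snd U" using V(2) by (metis prod.collapse)
    then show ?thesis using V(3) by auto
  qed
  define d0 where "d0 = Min (insert (l/2) D)"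
  have d0pos: "0 < d0" unfolding d0_def using finD Dpos l by (subst Min_gr_iff) auto
  have d0le: "d0 \<le> l/2" unfolding d0_def using finD by (intro Min_le) auto
  have d0D: "d0 \<le> x" if xD: "x \<in> D" for x unfolding d0_def using finD xD by (intro Min_le) auto
  define e where "e = d0 / 3"
  have e: "0 < e" "3 * e = d0" unfolding e_def using d0pos by auto
  obtain M where M: "matching \<beta> \<gamma> M" "dset \<alpha> \<beta> \<gamma> M < e"
    using d_approx[OF IPb IPg, of \<alpha> e] d0 e by auto
  have t1: "T1 \<beta> M < e" and t2: "T2 \<gamma> M < e" using M(2) dset_ge(1,2)[of _ M \<alpha>] by (meson le_less_trans)+
  have "U \<in> fst ` M"
  proof (rule ccontr)
    assume "U \<notin> fst ` M"
    then have "l \<le> T1 \<beta> M" unfolding l_def by (rule unmatched[OF IPb IPg M(1) Ub])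
    then show False using t1 e d0le l by linarith
  qed
  then obtain V where UV: "(U, V) \<in> M" by force
  have Vg: "V \<in> \<gamma>" using matching_sub[OF M(1)] UV by auto
  have "\<bar>Leb U - Leb V\<bar> \<le> SS M" using SS_ge[OF M(1) UV] by simp
  also have "\<dots> \<le> T1 \<beta> M" by (rule T1_ge_SS[OF IPb IPg M(1)])
  finally have lv: "\<bar>Leb U - Leb V\<bar> < e" using t1 by linarith
  have p1: "fst U \<le> fst V + T1 \<beta> M" by (rule pos_lemma[OF IPb IPg M(1) UV])
  have "fst V \<le> fst U + T1 \<gamma> (converse M)"
    by (rule pos_lemma[OF IPg IPb matching_converse[OF M(1)]]) (use UV in simp)
  then have p2: "fst V \<le> fst U + T2 \<gamma> M" unfolding T1_converse .
  have VG: "V \<in> G" unfolding G_def using Vg lv e d0le l_def by auto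
  show "U \<in> \<gamma>"
  proof (cases "V = U")
    case True then show ?thesis using Vg by simp
  next
    case False
    then have "\<bar>fst V - fst U\<bar> + \<bar>snd V - snd U\<bar> \<in> D" unfolding D_def using VG by blast
    then have "d0 \<le> \<bar>fst V - fst U\<bar> + \<bar>snd V - snd U\<bar>" by (rule d0D)
    moreover have "\<bar>fst V - fst U\<bar> < e" using p1 p2 t1 t2 by linarith
    moreover have "\<bar>snd V - snd U\<bar> < 2 * e" using p1 p2 t1 t2 lv unfolding Leb_def by linarith
    ultimately show ?thesis using e by linarith
  qed
qed

lemma d_zero:
  assumes IPb: "is_IP Lb \<beta>" and IPg: "is_IP Lg \<gamma>" and d0: "d_alpha \<alpha> \<beta> \<gamma> = 0"
  shows "\<beta> = \<gamma>"
proof -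
  have "d_alpha \<alpha> \<gamma> \<beta> = 0" using d0 d_alpha_commute[of \<alpha> \<beta> \<gamma>] by simp
  then have "\<gamma> \<subseteq> \<beta>" by (rule d_zero_sub[OF IPg IPb])
  then show ?thesis using d_zero_sub[OF IPb IPg d0] by blast
qed



definition eb :: "ipart \<Rightarrow> nat \<Rightarrow> real \<times> real" where
  "eb \<beta> k = (if \<beta> = {} then (0, 0) else from_nat_into \<beta> k)"

definition phi :: "real \<Rightarrow> ipart \<Rightarrow> nat \<Rightarrow> real \<times> real \<times> real \<times> real \<times> real" where
  "phi \<alpha> \<beta> k = (IPnorm \<beta>, total_div \<alpha> \<beta>, fst (eb \<beta> k), snd (eb \<beta> k), block_div \<alpha> \<beta> (eb \<beta> k))"

definition closeb :: "real \<Rightarrow> ipart \<Rightarrow> ipart \<Rightarrow> nat \<Rightarrow> real \<Rightarrow> bool" where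
  "closeb \<alpha> \<beta> \<gamma> k \<delta> \<longleftrightarrow> \<bar>IPnorm \<beta> - IPnorm \<gamma>\<bar> < \<delta> \<and> \<bar>total_div \<alpha> \<beta> - total_div \<alpha> \<gamma>\<bar> < \<delta> \<and>
     \<bar>fst (eb \<beta> k) - fst (eb \<gamma> k)\<bar> < \<delta> \<and> \<bar>snd (eb \<beta> k) - snd (eb \<gamma> k)\<bar> < \<delta> \<and>
     \<bar>block_div \<alpha> \<beta> (eb \<beta> k) - block_div \<alpha> \<gamma> (eb \<gamma> k)\<bar> < \<delta>"

lemma transfer_prec:
  assumes IPg: "is_IP Lg \<gamma>" and V: "V \<in> \<gamma>" "V' \<in> \<gamma>"
    and U: "fst U + l \<le> snd U" "fst U' + l \<le> snd U'" and dl: "2 * \<delta> \<le> l" "0 < l"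
    and p: "prec U U'"
    and c: "\<bar>fst U - fst V\<bar> < \<delta>" "\<bar>snd U - snd V\<bar> < \<delta>" "\<bar>fst U' - fst V'\<bar> < \<delta>" "\<bar>snd U' - snd V'\<bar> < \<delta>"
  shows "prec V V'"
proof -
  have "V \<noteq> V'"
  proof
    assume "V = V'"
    then have "\<bar>fst U' - fst V\<bar> < \<delta>" using c(3) by simp
    then show False using c U dl p unfolding prec_def by linarith
  qed
  then have "prec V V' \<or> prec V' V" by (rule IP_disj[OF IPg V])
  moreover have "\<not> prec V' V" using c U dl p unfolding prec_def by linarith
  ultimately show ?thesis by blast
qed

lemma approx_lemma:
  assumes IPb: "is_IP L \<beta>" and e: "0 < \<epsilon>"
  shows "\<exists>\<delta>>0. \<exists>K. finite K \<and> K \<noteq> {} \<and>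
           (\<forall>\<gamma> Lg. is_IP Lg \<gamma> \<longrightarrow> (\<forall>k\<in>K. closeb \<alpha> \<beta> \<gamma> k \<delta>) \<longrightarrow> d_alpha \<alpha> \<beta> \<gamma> < \<epsilon>)"
proof -
  obtain F where F: "finite F" "F \<subseteq> \<beta>" "L - \<epsilon>/2 < sum Leb F" using IP_sum_approx[OF IPb, of "\<epsilon>/2"] e by auto
  define idx where "idx U = (SOME k. eb \<beta> k = U)" for U
  have idx: "eb \<beta> (idx U) = U" if "U \<in> F" for U
  proof -
    have ne: "\<beta> \<noteq> {}" using that F(2) by blast
    have "\<exists>k. from_nat_into \<beta> k = U" using from_nat_into_surj[OF IP_countable[OF IPb]] that F(2) by blast
    then have "\<exists>k. eb \<beta> k = U" unfolding eb_def using ne by simp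
    then show ?thesis unfolding idx_def by (rule someI_ex)
  qed
  define Ks where "Ks = idx ` F"
  define n where "n = card F"
  have finKs: "finite Ks" unfolding Ks_def using F(1) by simp
  have ebKs: "eb \<beta> ` Ks = F" unfolding Ks_def image_image using idx by simp
  have injKs: "inj_on (eb \<beta>) Ks" unfolding Ks_def by (rule inj_onI) (auto simp: idx)
  have cardKs: "card Ks = n" unfolding n_def using card_image[OF injKs] ebKs by simp
  define l where "l = Min (insert 1 (Leb ` F))"
  have lpos: "0 < l" unfolding l_def using F(1) F(2) Leb_pos[OF IPb] by (subst Min_gr_iff) auto
  have lle: "l \<le> Leb U" if "U \<in> F" for U unfolding l_def using F(1) that by (intro Min_le) auto
  define \<delta> where "\<delta> = min (l/2) (\<epsilon> / (2 * (4 * real n + 2)))"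
  have dpos: "0 < \<delta>" unfolding \<delta>_def using lpos e by auto
  have dl: "2 * \<delta> \<le> l" unfolding \<delta>_def by linarith
  have de: "(4 * real n + 2) * \<delta> \<le> \<epsilon> / 2"
  proof -
    have "\<delta> \<le> \<epsilon> / (2 * (4 * real n + 2))" unfolding \<delta>_def by linarith
    then have "(4 * real n + 2) * \<delta> \<le> (4 * real n + 2) * (\<epsilon> / (2 * (4 * real n + 2)))"
      by (intro mult_left_mono) auto
    also have "\<dots> = \<epsilon> / 2" by (simp add: field_simps)
    finally show ?thesis .
  qed
  have main: "d_alpha \<alpha> \<beta> \<gamma> < \<epsilon>" if IPg: "is_IP Lg \<gamma>" and cl: "\<forall>k\<in>insert 0 Ks. closeb \<alpha> \<beta> \<gamma> k \<delta>" for \<gamma> Lg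
  proof -
    have clK: "closeb \<alpha> \<beta> \<gamma> k \<delta>" if "k \<in> Ks" for k using cl that by blast
    have cl0: "closeb \<alpha> \<beta> \<gamma> 0 \<delta>" using cl by blast
    have Ub: "eb \<beta> k \<in> F" if "k \<in> Ks" for k using ebKs that by blast
    have Ul: "fst (eb \<beta> k) + l \<le> snd (eb \<beta> k)" if "k \<in> Ks" for k
      using lle[OF Ub[OF that]] unfolding Leb_def by simp
    have Vg: "eb \<gamma> k \<in> \<gamma>" if k: "k \<in> Ks" for k
    proof (cases "\<gamma> = {}")
      case True
      then have "eb \<gamma> k = (0, 0)" unfolding eb_def by simp
      then show ?thesis using clK[OF k] Ul[OF k] dl lpos unfolding closeb_def by auto
    next
      case False
      then show ?thesis unfolding eb_def by (simp add: from_nat_into)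
    qed
    define M where "M = (\<lambda>k. (eb \<beta> k, eb \<gamma> k)) ` Ks"
    have injM: "inj_on (\<lambda>k. (eb \<beta> k, eb \<gamma> k)) Ks"
      using injKs unfolding inj_on_def by auto
    have sumM: "sum g M = (\<Sum>k\<in>Ks. g (eb \<beta> k, eb \<gamma> k))" for g :: "_ \<Rightarrow> real"
      unfolding M_def using sum.reindex[OF injM, of g] by (simp add: comp_def)
    have mM: "matching \<beta> \<gamma> M"
      unfolding matching_def
    proof (intro conjI ballI impI)
      show "finite M" unfolding M_def using finKs by simp
      show "M \<subseteq> \<beta> \<times> \<gamma>" unfolding M_def using Ub Vg F(2) by blast
      fix p q assume pq: "p \<in> M" "q \<in> M" "p \<noteq> q"
      then obtain k k' where kk: "k \<in> Ks" "k' \<in> Ks" "p = (eb \<beta> k, eb \<gamma> k)" "q = (eb \<beta> k', eb \<gamma> k')"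
        unfolding M_def by blast
      have "eb \<beta> k \<noteq> eb \<beta> k'" using pq(3) kk injKs by (metis inj_on_def)
      then have "prec (eb \<beta> k) (eb \<beta> k') \<or> prec (eb \<beta> k') (eb \<beta> k)"
        using IP_disj[OF IPb] Ub[OF kk(1)] Ub[OF kk(2)] F(2) by blast
      then show "(prec (fst p) (fst q) \<and> prec (snd p) (snd q)) \<or> (prec (fst q) (fst p) \<and> prec (snd q) (snd p))"
      proof
        assume pr: "prec (eb \<beta> k) (eb \<beta> k')"
        have "prec (eb \<gamma> k) (eb \<gamma> k')"
          by (rule transfer_prec[OF IPg Vg[OF kk(1)] Vg[OF kk(2)] Ul[OF kk(1)] Ul[OF kk(2)] dl lpos pr])
             (use clK[OF kk(1)] clK[OF kk(2)] in \<open>auto simp: closeb_def\<close>)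
        then show ?thesis using pr kk by simp
      next
        assume pr: "prec (eb \<beta> k') (eb \<beta> k)"
        have "prec (eb \<gamma> k') (eb \<gamma> k)"
          by (rule transfer_prec[OF IPg Vg[OF kk(2)] Vg[OF kk(1)] Ul[OF kk(2)] Ul[OF kk(1)] dl lpos pr])
             (use clK[OF kk(1)] clK[OF kk(2)] in \<open>auto simp: closeb_def\<close>)
        then show ?thesis using pr kk by simp
      qed
    qed
    have lenk: "\<bar>Leb (eb \<beta> k) - Leb (eb \<gamma> k)\<bar> \<le> 2 * \<delta>" if "k \<in> Ks" for k
      using clK[OF that] unfolding closeb_def Leb_def by linarith
    have SSb: "SS M \<le> real n * (2 * \<delta>)"
    proof -
      have "SS M = (\<Sum>k\<in>Ks. \<bar>Leb (eb \<beta> k) - Leb (eb \<gamma> k)\<bar>)" unfolding SS_def sumM by simp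
      also have "\<dots> \<le> (\<Sum>k\<in>Ks. 2 * \<delta>)" by (intro sum_mono lenk)
      also have "\<dots> = real n * (2 * \<delta>)" using cardKs by simp
      finally show ?thesis .
    qed
    have sU: "(\<Sum>p\<in>M. Leb (fst p)) = sum Leb F"
    proof -
      have "(\<Sum>p\<in>M. Leb (fst p)) = (\<Sum>k\<in>Ks. Leb (eb \<beta> k))" unfolding sumM by simp
      also have "\<dots> = sum Leb F" using sum.reindex[OF injKs, of Leb] ebKs by simp
      finally show ?thesis .
    qed
    have sV: "(\<Sum>p\<in>M. Leb (snd p)) \<ge> (\<Sum>p\<in>M. Leb (fst p)) - SS M"
    proof -
      have "(\<Sum>p\<in>M. Leb (fst p)) - (\<Sum>p\<in>M. Leb (snd p)) = (\<Sum>p\<in>M. Leb (fst p) - Leb (snd p))"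
        by (simp add: sum_subtractf)
      also have "\<dots> \<le> SS M" unfolding SS_def by (intro sum_mono) simp
      finally show ?thesis by simp
    qed
    have nb: "IPnorm \<beta> = L" by (rule IPnorm_eq[OF IPb])
    have ng: "IPnorm \<gamma> < L + \<delta>" using cl0 nb unfolding closeb_def by linarith
    have nd: "0 \<le> real n * \<delta>" using dpos by simp
    have de': "4 * (real n * \<delta>) + 2 * \<delta> \<le> \<epsilon> / 2" using de by (simp add: algebra_simps)
    have SSb': "SS M \<le> 2 * (real n * \<delta>)" using SSb by (simp add: algebra_simps)
    have t1: "T1 \<beta> M < \<epsilon>" unfolding T1_def sU nb using SSb' F(3) de' dpos nd by linarith
    have t2: "T2 \<gamma> M < \<epsilon>" unfolding T2_def using sV sU SSb' F(3) de' ng dpos nd by linarith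
    have t3: "T3 \<alpha> \<beta> \<gamma> M < \<epsilon>"
    proof -
      have "T3 \<alpha> \<beta> \<gamma> M \<le> \<delta>" unfolding T3_def
      proof (subst Sup_ins0_le)
        show "finite ((\<lambda>p. \<bar>block_div \<alpha> \<beta> (fst p) - block_div \<alpha> \<gamma> (snd p)\<bar>) ` M)"
          using mM matching_fin by blast
        show "0 \<le> \<delta> \<and> (\<forall>a\<in>(\<lambda>p. \<bar>block_div \<alpha> \<beta> (fst p) - block_div \<alpha> \<gamma> (snd p)\<bar>) ` M. a \<le> \<delta>)"
          using dpos clK unfolding M_def closeb_def by force
      qed
      moreover have "\<delta> < \<epsilon>" using de' dpos nd by linarith
      ultimately show ?thesis by linarith
    qed
    have t4: "T4 \<alpha> \<beta> \<gamma> < \<epsilon>"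
    proof -
      have "\<delta> < \<epsilon>" using de' dpos nd by linarith
      then show ?thesis using cl0 unfolding T4_def closeb_def by linarith
    qed
    have "dset \<alpha> \<beta> \<gamma> M < \<epsilon>" using t1 t2 t3 t4 by (rule dset_less)
    then show ?thesis using d_le_dset[OF IPb IPg mM, of \<alpha>] by linarith
  qed
  show ?thesis
    by (rule exI[of _ \<delta>], intro conjI exI[of _ "insert 0 Ks"]) (use dpos finKs main in auto)
qed



lemma dist_fun_coord:
  fixes u v :: "'a::countable \<Rightarrow> 'b::metric_space"
  shows "(1/2)^(to_nat i) * min (dist (u i) (v i)) 1 \<le> dist u v"
proof -
  have "(1/2)^(to_nat i) * min (dist (u i) (v i)) 1
          = sum (\<lambda>p. (1/2)^p * min (dist (u (from_nat p)) (v (from_nat p))) 1) {to_nat i}"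
    by simp
  also have "... \<le> (\<Sum>p. (1/2)^p * min (dist (u (from_nat p)) (v (from_nat p))) 1)"
    apply (rule sum_le_suminf)
    by (rule summable_comparison_test'[of "\<lambda>n. (1/2)^n"], auto simp add: summable_geometric_iff)
  also have "... = dist u v"
    unfolding dist_fun_def by auto
  finally show ?thesis .
qed

lemma dist_fun_upper:
  fixes u v :: "nat \<Rightarrow> real"
  assumes "\<And>i. dist (u i) (v i) \<le> c"
  shows "dist u v \<le> 2 * c"
proof -
  have s: "summable (\<lambda>n. (1/2::real)^n)" by (simp add: summable_geometric_iff)
  have "dist u v = (\<Sum>p. (1/2)^p * min (dist (u (from_nat p)) (v (from_nat p))) 1)"
    unfolding dist_fun_def by auto
  also have "... \<le> (\<Sum>p. (1/2)^p * c)"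
    apply (rule suminf_le)
      apply (intro allI mult_left_mono) 
    using assms min.coboundedI1 apply auto[2]
     apply (rule summable_comparison_test'[of "\<lambda>n. (1/2)^n"], auto simp add: summable_geometric_iff)
    using s summable_mult2 by blast
  also have "... = 2 * c" using suminf_geometric[of "1/2::real"] suminf_mult2[OF s, of c] by simp
  finally show ?thesis .
qed

lemma embed_lemma:
  assumes MS: "Metric_space M m"
    and D: "countable D" "D \<subseteq> M" "\<And>x e. x \<in> M \<Longrightarrow> e > 0 \<Longrightarrow> \<exists>y\<in>D. m x y < e"
  shows "\<exists>d. Metric_space M d \<and>
             Metric_space.mtopology M d = Metric_space.mtopology M m \<and>
             (\<exists>(K :: (nat \<Rightarrow> real) set) dK f.
                 Metric_space K dK \<and> compact_space (Metric_space.mtopology K dK) \<and>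
                 f ` M \<subseteq> K \<and>
                 (\<forall>x\<in>M. \<forall>y\<in>M. dK (f x) (f y) = d x y))"
proof -
  interpret m: Metric_space M m by (rule MS)
  define xs where "xs = from_nat_into D"
  define f where "f x = (\<lambda>k. min (m x (xs k)) 1)" for x
  define d where "d x y = dist (f x) (f y)" for x y
  define K where "K = (PiE UNIV (\<lambda>_::nat. {0..1::real}))"
  have dense: "\<exists>k. m x (xs k) < e" if xe: "x \<in> M" "e > 0" for x e
  proof -
    obtain y where "y \<in> D" "m x y < e" using D(3)[OF xe] by blast
    then obtain k where "from_nat_into D k = y" using from_nat_into_surj[OF D(1) \<open>y \<in> D\<close>] by blast
    then show ?thesis unfolding xs_def using \<open>m x y < e\<close> by blast
  qed
  have xsM: "xs k \<in> M" if ne: "M \<noteq> {}" for k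
  proof -
    obtain x where "x \<in> M" using ne by auto
    then have "D \<noteq> {}" using D(3)[of x 1] by auto
    then have "from_nat_into D k \<in> D" by (rule from_nat_into)
    then show ?thesis unfolding xs_def using D(2) by blast
  qed
  have up: "d x y \<le> 2 * m x y" if xy: "x \<in> M" "y \<in> M" for x y
  proof -
    show ?thesis unfolding d_def
    proof (rule dist_fun_upper)
      fix i
      have "M \<noteq> {}" using \<open>x \<in> M\<close> by blast
      then have xi: "xs i \<in> M" by (rule xsM)
      have t1: "m x (xs i) \<le> m x y + m y (xs i)" using m.triangle[OF \<open>x\<in>M\<close> \<open>y\<in>M\<close> xi] .
      have t2: "m y (xs i) \<le> m y x + m x (xs i)" using m.triangle[OF \<open>y\<in>M\<close> \<open>x\<in>M\<close> xi] .
      have "m y x = m x y" by (rule m.commute)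
      then have "\<bar>m x (xs i) - m y (xs i)\<bar> \<le> m x y" using t1 t2 by linarith
      then show "dist (f x i) (f y i) \<le> m x y" unfolding f_def dist_real_def by linarith
    qed
  qed
  have low: "\<exists>\<delta>>0. \<forall>y\<in>M. d x y < \<delta> \<longrightarrow> m x y < e" if xe: "x \<in> M" "e > 0" for x e
  proof -
    define e' where "e' = min e 1"
    have e': "e' > 0" "e' \<le> e" "e' \<le> 1" using xe unfolding e'_def by auto
    obtain k where k: "m x (xs k) < e'/3" using dense[OF xe(1), of "e'/3"] e' by auto
    define \<delta> where "\<delta> = (1/2)^(to_nat k) * (e'/3)"
    have "\<delta> > 0" unfolding \<delta>_def using e' by auto
    moreover have "m x y < e" if yy: "y \<in> M" "d x y < \<delta>" for y
    proof -
      have "(1/2)^(to_nat k) * min (dist (f x k) (f y k)) 1 < (1/2)^(to_nat k) * (e'/3)"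
        using dist_fun_coord[of k "f x" "f y"] yy unfolding d_def \<delta>_def by linarith
      then have "min (dist (f x k) (f y k)) 1 < e'/3" by simp
      then have "dist (f x k) (f y k) < e'/3" using e' by linarith
      moreover have "f x k = m x (xs k)" unfolding f_def using k e' by simp
      ultimately have "\<bar>m x (xs k) - min (m y (xs k)) 1\<bar> < e'/3" unfolding f_def dist_real_def by simp
      then have "min (m y (xs k)) 1 < 2*e'/3" using k by linarith
      then have "m y (xs k) < 2*e'/3" using e' by linarith
      moreover have "xs k \<in> M" using xsM \<open>x \<in> M\<close> by blast
      moreover have "m x y \<le> m x (xs k) + m (xs k) y" using m.triangle[of x "xs k" y] \<open>xs k \<in> M\<close> \<open>x\<in>M\<close> yy(1) by blast
      moreover have "m (xs k) y = m y (xs k)" by (rule m.commute)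
      ultimately have "m x y < e'" using k by linarith
      then show ?thesis using e' by linarith
    qed
    ultimately show ?thesis by blast
  qed
  have dMS: "Metric_space M d"
  proof
    show "0 \<le> d x y" for x y unfolding d_def by simp
    show "d x y = d y x" for x y unfolding d_def by (simp add: dist_commute)
    show "d x z \<le> d x y + d y z" for x y z unfolding d_def by (simp add: dist_triangle)
    show "(d x y = 0) = (x = y)" if "x \<in> M" "y \<in> M" for x y
    proof
      assume "d x y = 0"
      have "m x y < e" if "e > 0" for e using low[OF \<open>x\<in>M\<close> that] \<open>d x y = 0\<close> \<open>y\<in>M\<close> by auto
      then have "m x y \<le> 0" by (metis linorder_not_le less_irrefl)
      then show "x = y" using m.nonneg[of x y] m.zero that by simp
    qed (simp add: d_def)
  qed
  interpret dd: Metric_space M d by (rule dMS)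
  have top: "dd.mtopology = m.mtopology"
  proof (rule topology_eq[THEN iffD2], intro allI)
    fix U
    have 1: "(\<forall>x\<in>U. \<exists>r>0. dd.mball x r \<subseteq> U) \<Longrightarrow> (\<forall>x\<in>U. \<exists>r>0. m.mball x r \<subseteq> U)" if UM: "U \<subseteq> M"
    proof (intro ballI)
      fix x assume H: "\<forall>x\<in>U. \<exists>r>0. dd.mball x r \<subseteq> U" and "x \<in> U"
      then obtain r where r: "r > 0" "dd.mball x r \<subseteq> U" by auto
      have "m.mball x (r/2) \<subseteq> U"
      proof
        fix y assume "y \<in> m.mball x (r/2)"
        then have "x \<in> M" "y \<in> M" "m x y < r/2" by auto
        then have "d x y < r" using up by fastforce
        then show "y \<in> U" using r \<open>x\<in>M\<close> \<open>y\<in>M\<close> by auto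
      qed
      then show "\<exists>r>0. m.mball x r \<subseteq> U" using r by (intro exI[of _ "r/2"]) auto
    qed
    have 2: "(\<forall>x\<in>U. \<exists>r>0. m.mball x r \<subseteq> U) \<Longrightarrow> (\<forall>x\<in>U. \<exists>r>0. dd.mball x r \<subseteq> U)" if UM: "U \<subseteq> M"
    proof (intro ballI)
      fix x assume H: "\<forall>x\<in>U. \<exists>r>0. m.mball x r \<subseteq> U" and "x \<in> U"
      then obtain r where r: "r > 0" "m.mball x r \<subseteq> U" by auto
      have "x \<in> M" using UM \<open>x\<in>U\<close> by auto
      obtain \<delta> where \<delta>: "\<delta> > 0" "\<forall>y\<in>M. d x y < \<delta> \<longrightarrow> m x y < r" using low[OF \<open>x\<in>M\<close> r(1)] by auto
      have "dd.mball x \<delta> \<subseteq> U" using \<delta> r by auto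
      then show "\<exists>r>0. dd.mball x r \<subseteq> U" using \<delta> by auto
    qed
    show "openin dd.mtopology U = openin m.mtopology U"
      unfolding dd.openin_mtopology m.openin_mtopology using 1 2 by blast
  qed
  have KMS: "Metric_space K dist" by (rule Met_TC.subspace) simp
  interpret KS: Submetric UNIV dist K by (simp add: Submetric_axioms_def Submetric_def Met_TC.Metric_space_axioms)
  have "compactin (product_topology (\<lambda>_. euclidean) UNIV) K"
    unfolding K_def by (subst compactin_PiE) auto
  then have "compact K" by (simp add: euclidean_product_topology)
  then have cK: "compact_space (Metric_space.mtopology K dist)"
    using KS.mtopology_submetric compact_space_subtopology compactin_mtopology_eq_compact by metis
  have fK: "f ` M \<subseteq> K" unfolding K_def f_def by (auto simp: m.nonneg)
  show ?thesis
    apply (rule exI[of _ d])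
    using dMS top KMS cK fK unfolding d_def by blast
qed


lemma comp_bounds:
  fixes x y :: "real \<times> real \<times> real \<times> real \<times> real"
  shows "\<bar>fst x - fst y\<bar> \<le> dist x y"
    and "\<bar>fst (snd x) - fst (snd y)\<bar> \<le> dist x y"
    and "\<bar>fst (snd (snd x)) - fst (snd (snd y))\<bar> \<le> dist x y"
    and "\<bar>fst (snd (snd (snd x))) - fst (snd (snd (snd y)))\<bar> \<le> dist x y"
    and "\<bar>snd (snd (snd (snd x))) - snd (snd (snd (snd y)))\<bar> \<le> dist x y"
proof -
  have s1: "dist (snd x) (snd y) \<le> dist x y" by (rule dist_snd_le)
  have s2: "dist (snd (snd x)) (snd (snd y)) \<le> dist x y" using dist_snd_le[of "snd x" "snd y"] s1 by linarith
  have s3: "dist (snd (snd (snd x))) (snd (snd (snd y))) \<le> dist x y"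
    using dist_snd_le[of "snd (snd x)" "snd (snd y)"] s2 by linarith
  show "\<bar>fst x - fst y\<bar> \<le> dist x y" using dist_fst_le[of x y] by (simp add: dist_real_def)
  show "\<bar>fst (snd x) - fst (snd y)\<bar> \<le> dist x y" using dist_fst_le[of "snd x" "snd y"] s1 by (simp add: dist_real_def)
  show "\<bar>fst (snd (snd x)) - fst (snd (snd y))\<bar> \<le> dist x y"
    using dist_fst_le[of "snd (snd x)" "snd (snd y)"] s2 by (simp add: dist_real_def)
  show "\<bar>fst (snd (snd (snd x))) - fst (snd (snd (snd y)))\<bar> \<le> dist x y"
    using dist_fst_le[of "snd (snd (snd x))" "snd (snd (snd y))"] s3 by (simp add: dist_real_def)
  show "\<bar>snd (snd (snd (snd x))) - snd (snd (snd (snd y)))\<bar> \<le> dist x y"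
    using dist_snd_le[of "snd (snd (snd x))" "snd (snd (snd y))"] s3 by (simp add: dist_real_def)
qed

lemma phi_close:
  assumes d: "dist (phi \<alpha> \<beta>) (phi \<alpha> \<gamma>) < (1/2)^(to_nat k) * min \<delta> 1" and dp: "0 < \<delta>"
  shows "closeb \<alpha> \<beta> \<gamma> k \<delta>"
proof -
  have "(1/2)^(to_nat k) * min (dist (phi \<alpha> \<beta> k) (phi \<alpha> \<gamma> k)) 1 < (1/2)^(to_nat k) * min \<delta> 1"
    using dist_fun_coord[of k "phi \<alpha> \<beta>" "phi \<alpha> \<gamma>"] d by linarith
  then have "min (dist (phi \<alpha> \<beta> k) (phi \<alpha> \<gamma> k)) 1 < min \<delta> 1" by simp
  then have dd: "dist (phi \<alpha> \<beta> k) (phi \<alpha> \<gamma> k) < \<delta>" by linarith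
  show ?thesis unfolding closeb_def
    using comp_bounds[of "phi \<alpha> \<beta> k" "phi \<alpha> \<gamma> k"] dd unfolding phi_def by auto
qed

lemma I_alpha_IP: "\<beta> \<in> I_alpha \<alpha> \<Longrightarrow> is_IP (IPnorm \<beta>) \<beta>"
  unfolding I_alpha_def using IP_IPnorm by blast

lemma separable_I:
  "\<exists>D. countable D \<and> D \<subseteq> I_alpha \<alpha> \<and> (\<forall>\<beta>\<in>I_alpha \<alpha>. \<forall>e>0. \<exists>\<gamma>\<in>D. d_alpha \<alpha> \<beta> \<gamma> < e)"
proof -
  define S where "S = phi \<alpha> ` I_alpha \<alpha>"
  obtain T where T: "countable T" "T \<subseteq> S" "S \<subseteq> closure T" using separable[of S] by blast
  define pick where "pick t = (SOME \<beta>. \<beta> \<in> I_alpha \<alpha> \<and> phi \<alpha> \<beta> = t)" for t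
  have pick: "pick t \<in> I_alpha \<alpha> \<and> phi \<alpha> (pick t) = t" if "t \<in> T" for t
  proof -
    have "\<exists>\<beta>. \<beta> \<in> I_alpha \<alpha> \<and> phi \<alpha> \<beta> = t" using T(2) that unfolding S_def by blast
    then show ?thesis unfolding pick_def by (rule someI_ex)
  qed
  define D where "D = pick ` T"
  have "countable D" unfolding D_def using T(1) by simp
  moreover have "D \<subseteq> I_alpha \<alpha>" unfolding D_def using pick by blast
  moreover have "\<exists>\<gamma>\<in>D. d_alpha \<alpha> \<beta> \<gamma> < e" if b: "\<beta> \<in> I_alpha \<alpha>" and e: "e > 0" for \<beta> e
  proof -
    obtain \<delta> K where dK: "\<delta> > 0" "finite K" "K \<noteq> {}"
      "\<And>\<gamma> Lg. is_IP Lg \<gamma> \<Longrightarrow> (\<forall>k\<in>K. closeb \<alpha> \<beta> \<gamma> k \<delta>) \<Longrightarrow> d_alpha \<alpha> \<beta> \<gamma> < e"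
      using approx_lemma[OF I_alpha_IP[OF b] e, of \<alpha>] by blast
    define \<eta> where "\<eta> = Min ((\<lambda>k. (1/2)^(to_nat k) * min \<delta> 1) ` K)"
    have \<eta>pos: "0 < \<eta>" unfolding \<eta>_def using dK by (subst Min_gr_iff) auto
    have \<eta>le: "\<eta> \<le> (1/2)^(to_nat k) * min \<delta> 1" if "k \<in> K" for k
      unfolding \<eta>_def using dK(2) that by (intro Min_le) auto
    have "phi \<alpha> \<beta> \<in> closure T" using T(3) b unfolding S_def by blast
    then obtain t where t: "t \<in> T" "dist t (phi \<alpha> \<beta>) < \<eta>" using \<eta>pos closure_approachable by blast
    define \<gamma> where "\<gamma> = pick t"
    have g: "\<gamma> \<in> I_alpha \<alpha>" "phi \<alpha> \<gamma> = t" using pick[OF t(1)] unfolding \<gamma>_def by auto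
    have "closeb \<alpha> \<beta> \<gamma> k \<delta>" if "k \<in> K" for k
    proof (rule phi_close[OF _ dK(1)])
      show "dist (phi \<alpha> \<beta>) (phi \<alpha> \<gamma>) < (1/2)^(to_nat k) * min \<delta> 1"
        using t(2) g(2) \<eta>le[OF that] by (simp add: dist_commute)
    qed
    then have "d_alpha \<alpha> \<beta> \<gamma> < e" using dK(4)[OF I_alpha_IP[OF g(1)]] by blast
    moreover have "\<gamma> \<in> D" unfolding D_def \<gamma>_def using t(1) by blast
    ultimately show ?thesis by blast
  qed
  ultimately show ?thesis by blast
qed

lemma metric_I: "Metric_space (I_alpha \<alpha>) (d_alpha \<alpha>)"
proof
  show "0 \<le> d_alpha \<alpha> x y" for x y by (rule d_alpha_nonneg)
  show "d_alpha \<alpha> x y = d_alpha \<alpha> y x" for x y by (rule d_alpha_commute)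
  show "(d_alpha \<alpha> x y = 0) = (x = y)" if "x \<in> I_alpha \<alpha>" "y \<in> I_alpha \<alpha>" for x y
    using d_zero[OF I_alpha_IP I_alpha_IP] d_self[OF I_alpha_IP] that by metis
  show "d_alpha \<alpha> x z \<le> d_alpha \<alpha> x y + d_alpha \<alpha> y z"
    if "x \<in> I_alpha \<alpha>" "y \<in> I_alpha \<alpha>" "z \<in> I_alpha \<alpha>" for x y z
    using d_triangle[OF I_alpha_IP I_alpha_IP I_alpha_IP] that by blast
qed

theorem corollary3p7:
  fixes \<alpha> :: real
  assumes "0 < \<alpha>" and "\<alpha> < 1"
  shows "\<exists>d. Metric_space (I_alpha \<alpha>) d \<and>
             Metric_space.mtopology (I_alpha \<alpha>) d = Metric_space.mtopology (I_alpha \<alpha>) (d_alpha \<alpha>) \<and>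
             (\<exists>(K :: (nat \<Rightarrow> real) set) dK f.
                 Metric_space K dK \<and> compact_space (Metric_space.mtopology K dK) \<and>
                 f ` I_alpha \<alpha> \<subseteq> K \<and>
                 (\<forall>x\<in>I_alpha \<alpha>. \<forall>y\<in>I_alpha \<alpha>. dK (f x) (f y) = d x y))"
proof -
  obtain D where D: "countable D" "D \<subseteq> I_alpha \<alpha>" "\<And>\<beta> e. \<beta> \<in> I_alpha \<alpha> \<Longrightarrow> e > 0 \<Longrightarrow> \<exists>\<gamma>\<in>D. d_alpha \<alpha> \<beta> \<gamma> < e"
    using separable_I[of \<alpha>] by blast
  show ?thesis by (rule embed_lemma[OF metric_I D(1) D(2) D(3)])
qed

end
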